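(* In the bootstrap setting, let $|\alpha|+|\beta|+|\sigma|\le10$ and $i,j\in\{1,2,3\}$. Then for all $T\in[0,T_{\mathrm{boot}})$, $\mathcal A^{\alpha,\beta,\sigma}_5\lesssim\epsilon^2(1+T)^{2|\beta|(1+\delta)}$, where $$\mathcal A^{\alpha,\beta,\sigma}_5:=\big\|(1+t)\langle v\rangle^{2\nu_{\alpha,\beta,\sigma}-1}\langle x-(t+1)v\rangle^{2\omega_{\alpha,\beta,\sigma}-1}\bar a_{ij}(D^{\alpha,\beta,\sigma}g)^2\big\|_{L^1([0,T];L^1_xL^1_v)}.$$
   Context: Notation: $\langle z\rangle=\sqrt{1+|z|^2}$; repeated lower-case indices summed over $\{1,2,3\}$ unless fixed. Multi-indices $\alpha,\beta,\sigma\in(\mathbb N\cup\{0\})^3$ with $|\alpha|=\sum\alpha_l$. $D^{\alpha,\beta,\sigma}=\partial_x^\alpha\partial_v^\beta Y^\sigma$ with $Y^\sigma=\prod_lY_l^{\sigma_l}$, $Y_l=(t+1)\partial_{x_l}+\partial_{v_l}$. $\nu_{\alpha,\beta,\sigma}=20-\frac32(|\alpha|+|\sigma|)-\frac12|\beta|$, $\omega_{\alpha,\beta,\sigma}=20-\frac32|\sigma|-\frac12(|\alpha|+|\beta|)$, $W_{\alpha,\beta,\sigma}=\langle v\rangle^{\nu_{\alpha,\beta,\sigma}}\langle x-(t+1)v\rangle^{\omega_{\alpha,\beta,\sigma}}$. Mixed norms take $v$ first, then $x$, then $t$. Bootstrap setting: fix $\gamma\in[0,1)$, $d_0>0$, $\delta\in(0,\frac18)$;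 $a_{ij}(z)=(\delta_{ij}-z_iz_j/|z|^2)|z|^{\gamma+2}$, $c=\partial^2_{z_iz_j}a_{ij}$, $\bar a_{ij}=\int a_{ij}(v-v_* )f(t,x,v_* )dv_*$, $\bar c=\int c(v-v_* )f(t,x,v_* )dv_*$; Landau equation $\partial_tf+v_i\partial_{x_i}f=\bar a_{ij}\partial^2_{v_iv_j}f-\bar cf$; $d(t)=d_0(1+(1+t)^{-\delta})$. Energy norm for $T>0$: $\|h\|^2_{E_T}=\sum_{|\alpha|+|\beta|+|\sigma|\le10}(1+T)^{-|\beta|(1+\delta)}\big(\|W_{\alpha,\beta,\sigma}D^{\alpha,\beta,\sigma}h\|^2_{L^\infty([0,T);L^2_xL^2_v)}+\|\langle v\rangle^{1/2}W_{\alpha,\beta,\sigma}D^{\alpha,\beta,\sigma}h\|^2_{L^2([0,T);L^2_xL^2_v)}\big)$. $\epsilon_0=\epsilon_0(d_0,\gamma)>0$ is a fixed sufficiently small constant, $\epsilon\in[0,\epsilon_0]$, and $f_{\mathrm{ini}}$ satisfies $\sum_{|\alpha|+|\beta|+|\sigma|\le10}\|\langle v\rangle^{20-\frac32|\alpha|-\frac12|\beta|-\frac32|\sigma|}\langle x-v\rangle^{20-\frac32|\sigma|-\frac12|\beta|-\frac12|\alpha|}\partial_x^\alpha\partial_v^\beta(\partial_x+\partial_v)^\sigma(e^{2d_0\langle v\rangle}f_{\mathrm{ini}})\|^2_{L^2_xL^2_v}<\epsilon$. $T_{\mathrm{boot}}>0$ and $f:[0,T_{\mathrm{boot}})\times\mathbb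 R^3\times\mathbb R^3\to\mathbb R$ is a (sufficiently regular) solution of the Landau equation with $f\ge0$, $f(0)=f_{\mathrm{ini}}$; $g=e^{d(t)\langle v\rangle}f$; and $\|g\|_{E_T}\le\epsilon^{3/4}$ for all $T\in[0,T_{\mathrm{boot}})$. $A\lesssim B$ means $A\le CB$ with $C$ depending only on $d_0,\gamma$. *)

theory Defs
  imports "HOL-Analysis.Analysis"
begin

definition jb :: "real^3 \<Rightarrow> real" where
  "jb z = sqrt (1 + (norm z)\<^sup>2)"

definition mlen :: "(3 \<Rightarrow> nat) \<Rightarrow> nat" where
  "mlen a = (\<Sum>l\<in>UNIV. a l)"

definition pdir :: "('a::real_normed_vector \<Rightarrow> real) \<Rightarrow> 'a \<Rightarrow> 'a \<Rightarrow> real" where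
  "pdir F u p = deriv (\<lambda>s. F (p + s *\<^sub>R u)) 0"

definition iter_pdir :: "'a::real_normed_vector list \<Rightarrow> ('a \<Rightarrow> real) \<Rightarrow> 'a \<Rightarrow> real" where
  "iter_pdir us F = foldr (\<lambda>u H. pdir H u) us F"

definition smooth_on :: "'a::euclidean_space set \<Rightarrow> ('a \<Rightarrow> real) \<Rightarrow> bool" where
  "smooth_on S F \<longleftrightarrow> (\<forall>us. set us \<subseteq> Basis \<longrightarrow>
      iter_pdir us F differentiable_on S \<and> continuous_on S (iter_pdir us F))"

type_synonym phase_fun = "real \<Rightarrow> real^3 \<Rightarrow> real^3 \<Rightarrow> real"

definition dx :: "3 \<Rightarrow> phase_fun \<Rightarrow> phase_fun" where
  "dx l h = (\<lambda>t x v. deriv (\<lambda>s. h t (x + s *\<^sub>R axis l 1) v) 0)"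

definition dv :: "3 \<Rightarrow> phase_fun \<Rightarrow> phase_fun" where
  "dv l h = (\<lambda>t x v. deriv (\<lambda>s. h t x (v + s *\<^sub>R axis l 1)) 0)"

definition Yop :: "3 \<Rightarrow> phase_fun \<Rightarrow> phase_fun" where
  "Yop l h = (\<lambda>t x v. (t + 1) * dx l h t x v + dv l h t x v)"

text \<open>d_{x_l} + d_{v_l} (the operator Y_l at t = 0, used for the initial data).\<close>
definition Y0op :: "3 \<Rightarrow> phase_fun \<Rightarrow> phase_fun" where
  "Y0op l h = (\<lambda>t x v. dx l h t x v + dv l h t x v)"

definition multi :: "(3 \<Rightarrow> phase_fun \<Rightarrow> phase_fun) \<Rightarrow> (3 \<Rightarrow> nat) \<Rightarrow> phase_fun \<Rightarrow> phase_fun" where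
  "multi P a = (P 1 ^^ a 1) \<circ> (P 2 ^^ a 2) \<circ> (P 3 ^^ a 3)"

definition Dop :: "(3 \<Rightarrow> nat) \<Rightarrow> (3 \<Rightarrow> nat) \<Rightarrow> (3 \<Rightarrow> nat) \<Rightarrow> phase_fun \<Rightarrow> phase_fun" where
  "Dop a b s h = multi dx a (multi dv b (multi Yop s h))"

definition D0op :: "(3 \<Rightarrow> nat) \<Rightarrow> (3 \<Rightarrow> nat) \<Rightarrow> (3 \<Rightarrow> nat) \<Rightarrow> phase_fun \<Rightarrow> phase_fun" where
  "D0op a b s h = multi dx a (multi dv b (multi Y0op s h))"

definition nu :: "(3 \<Rightarrow> nat) \<Rightarrow> (3 \<Rightarrow> nat) \<Rightarrow> (3 \<Rightarrow> nat) \<Rightarrow> real" where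
  "nu a b s = 20 - 3/2 * real (mlen a + mlen s) - 1/2 * real (mlen b)"

definition omega :: "(3 \<Rightarrow> nat) \<Rightarrow> (3 \<Rightarrow> nat) \<Rightarrow> (3 \<Rightarrow> nat) \<Rightarrow> real" where
  "omega a b s = 20 - 3/2 * real (mlen s) - 1/2 * real (mlen a + mlen b)"

definition Wt :: "(3 \<Rightarrow> nat) \<Rightarrow> (3 \<Rightarrow> nat) \<Rightarrow> (3 \<Rightarrow> nat) \<Rightarrow> phase_fun" where
  "Wt a b s t x v = jb v powr nu a b s * jb (x - (t + 1) *\<^sub>R v) powr omega a b s"

definition idx10 :: "((3 \<Rightarrow> nat) \<times> (3 \<Rightarrow> nat) \<times> (3 \<Rightarrow> nat)) set" where
  "idx10 = {(a, b, s). mlen a + mlen b + mlen s \<le> 10}"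

definition L2xv_sq :: "phase_fun \<Rightarrow> real \<Rightarrow> ennreal" where
  "L2xv_sq F t = (\<integral>\<^sup>+ x. (\<integral>\<^sup>+ v. ennreal ((F t x v)\<^sup>2) \<partial>lborel) \<partial>lborel)"

definition energy_sq :: "real \<Rightarrow> real \<Rightarrow> phase_fun \<Rightarrow> ennreal" where
  "energy_sq \<delta> T h = (\<Sum>(a, b, s)\<in>idx10.
      ennreal ((1 + T) powr (- real (mlen b) * (1 + \<delta>))) *
      ((SUP t\<in>{0..<T}. L2xv_sq (\<lambda>t x v. Wt a b s t x v * Dop a b s h t x v) t)
       + (\<integral>\<^sup>+ t\<in>{0..<T}. L2xv_sq
            (\<lambda>t x v. sqrt (jb v) * Wt a b s t x v * Dop a b s h t x v) t \<partial>lborel)))"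

definition acoef :: "real \<Rightarrow> 3 \<Rightarrow> 3 \<Rightarrow> real^3 \<Rightarrow> real" where
  "acoef \<gamma> i j z = ((if i = j then 1 else 0) - z$i * z$j / (norm z)\<^sup>2) * norm z powr (\<gamma> + 2)"

definition ccoef :: "real \<Rightarrow> real^3 \<Rightarrow> real" where
  "ccoef \<gamma> z = (\<Sum>i\<in>UNIV. \<Sum>j\<in>UNIV.
      pdir (pdir (acoef \<gamma> i j) (axis j 1)) (axis i 1) z)"

definition abar :: "real \<Rightarrow> phase_fun \<Rightarrow> 3 \<Rightarrow> 3 \<Rightarrow> phase_fun" where
  "abar \<gamma> f i j t x v = (\<integral>w. acoef \<gamma> i j (v - w) * f t x w \<partial>lborel)"

definition cbar :: "real \<Rightarrow> phase_fun \<Rightarrow> phase_fun" where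
  "cbar \<gamma> f t x v = (\<integral>w. ccoef \<gamma> (v - w) * f t x w \<partial>lborel)"

definition landau_sol :: "real \<Rightarrow> real \<Rightarrow> phase_fun \<Rightarrow> bool" where
  "landau_sol \<gamma> Tb f \<longleftrightarrow> (\<forall>t x v. 0 < t \<and> t < Tb \<longrightarrow>
      deriv (\<lambda>s. f s x v) t + (\<Sum>i\<in>UNIV. v$i * dx i f t x v)
      = (\<Sum>i\<in>UNIV. \<Sum>j\<in>UNIV. abar \<gamma> f i j t x v * dv i (dv j f) t x v)
        - cbar \<gamma> f t x v * f t x v)"

definition dfun :: "real \<Rightarrow> real \<Rightarrow> real \<Rightarrow> real" where
  "dfun d0 \<delta> t = d0 * (1 + (1 + t) powr (- \<delta>))"

definition gfun :: "real \<Rightarrow> real \<Rightarrow> phase_fun \<Rightarrow> phase_fun" where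
  "gfun d0 \<delta> f t x v = exp (dfun d0 \<delta> t * jb v) * f t x v"

definition init_small :: "real \<Rightarrow> real \<Rightarrow> phase_fun \<Rightarrow> bool" where
  "init_small d0 \<epsilon> f \<longleftrightarrow>
     (\<Sum>(a, b, s)\<in>idx10. L2xv_sq (\<lambda>t x v. Wt a b s 0 x v *
         D0op a b s (\<lambda>t x v. exp (2 * d0 * jb v) * f 0 x v) t x v) 0) < ennreal \<epsilon>"

definition A5 :: "real \<Rightarrow> real \<Rightarrow> real \<Rightarrow> phase_fun \<Rightarrow> (3 \<Rightarrow> nat) \<Rightarrow> (3 \<Rightarrow> nat) \<Rightarrow> (3 \<Rightarrow> nat)
                  \<Rightarrow> 3 \<Rightarrow> 3 \<Rightarrow> real \<Rightarrow> ennreal" where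
  "A5 \<gamma> d0 \<delta> f a b s i j T = (\<integral>\<^sup>+ t\<in>{0..T}. (\<integral>\<^sup>+ x. (\<integral>\<^sup>+ v. ennreal \<bar>
      (1 + t) * jb v powr (2 * nu a b s - 1) * jb (x - (t + 1) *\<^sub>R v) powr (2 * omega a b s - 1)
      * abar \<gamma> f i j t x v * (Dop a b s (gfun d0 \<delta> f) t x v)\<^sup>2\<bar> \<partial>lborel) \<partial>lborel) \<partial>lborel)"

end

theory Submission
  imports Defs
begin

lemma nn_integral_cmult_le_gen:
  fixes c :: ennreal
  assumes "c < top"
  shows "(\<integral>\<^sup>+x. c * f x \<partial>M) \<le> c * integral\<^sup>N M f"
proof (cases "c = 0")
  case True then show ?thesis by simp
next
  case False
  show ?thesis
    unfolding nn_integral_def[of M "\<lambda>x. c * f x"]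
  proof (rule SUP_least)
    fix g assume g: "g \<in> {g. simple_function M g \<and> g \<le> (\<lambda>x. c * f x)}"
    define h where "h = (\<lambda>x. g x * inverse c)"
    have sh: "simple_function M h" unfolding h_def using g by auto
    have ci: "c * inverse c = 1" using False assms divide_ennreal_def ennreal_divide_self by (auto simp: mult.commute)
    have "h \<le> f"
    proof (rule le_funI)
      fix x have "g x \<le> c * f x" using g by (auto simp: le_fun_def)
      then have "g x * inverse c \<le> c * f x * inverse c" by (rule mult_right_mono) simp
      also have "\<dots> = f x" using ci by (metis mult.assoc mult.commute mult_1)
      finally show "h x \<le> f x" by (simp add: h_def)
    qed
    have geq: "g = (\<lambda>x. c * h x)" unfolding h_def using ci by (auto simp: fun_eq_iff) (metis mult.assoc mult.commute mult_1)
    have "integral\<^sup>S M g = c * integral\<^sup>S M h" unfolding geq using sh by simp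
    also have "\<dots> \<le> c * integral\<^sup>N M f"
      using sh \<open>h \<le> f\<close> by (intro mult_left_mono) (auto simp: nn_integral_def intro!: SUP_upper)
    finally show "integral\<^sup>S M g \<le> c * integral\<^sup>N M f" .
  qed
qed

lemma nn_integral_cmult_gen:
  fixes c :: ennreal
  assumes "c < top"
  shows "(\<integral>\<^sup>+x. c * f x \<partial>M) = c * integral\<^sup>N M f"
proof (cases "c = 0")
  case True then show ?thesis by simp
next
  case False
  have ci: "inverse c * c = 1" using False assms divide_ennreal_def ennreal_divide_self by (auto simp: mult.commute)
  have ilt: "inverse c < top" using False by (metis ennreal_inverse_eq_top_iff top.not_eq_extremum)
  have "c * integral\<^sup>N M f = c * integral\<^sup>N M (\<lambda>x. inverse c * (c * f x))"
    using ci by (simp add: mult.assoc[symmetric])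
  also have "\<dots> \<le> c * (inverse c * (\<integral>\<^sup>+x. c * f x \<partial>M))"
    by (intro mult_left_mono nn_integral_cmult_le_gen ilt) simp
  also have "\<dots> = (\<integral>\<^sup>+x. c * f x \<partial>M)"
    using False assms divide_ennreal_def ennreal_divide_self by (simp add: mult.assoc[symmetric])
  finally show ?thesis using nn_integral_cmult_le_gen[OF assms, of M f] by (intro antisym)
qed

type_synonym pt = "real \<times> ((real^3) \<times> (real^3))"

definition exv :: "3 \<Rightarrow> pt" where
  "exv l = (0, (axis l 1, 0))"

definition unc :: "phase_fun \<Rightarrow> pt \<Rightarrow> real" where
  "unc h = (\<lambda>(t, x, v). h t x v)"

lemma exv_Basis: "exv l \<in> Basis"
  by (auto simp: exv_def Basis_prod_def Basis_vec_def)

lemma exv_line: "(t, x, v) + s *\<^sub>R exv l = (t, x + s *\<^sub>R axis l 1, v)"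
  by (simp add: exv_def)

lemma unc_dx: "unc (dx l h) = (\<lambda>p. pdir (unc h) (exv l) p)"
  by (auto simp: fun_eq_iff unc_def dx_def pdir_def exv_line)

lemma iter_pdir_replicate: "iter_pdir (replicate n u) H = ((\<lambda>H. pdir H u) ^^ n) H"
  by (induction n) (auto simp: iter_pdir_def)

lemma iter_pdir_append: "iter_pdir (xs @ ys) H = iter_pdir xs (iter_pdir ys H)"
  by (simp add: iter_pdir_def)

lemma iter_pdir_Cons: "iter_pdir (u # xs) H = pdir (iter_pdir xs H) u"
  by (simp add: iter_pdir_def)

lemma unc_funpow: "unc ((dx l ^^ n) h) = ((\<lambda>H. pdir H (exv l)) ^^ n) (unc h)"
  by (induction n) (auto simp: unc_dx)

definition usl :: "(3 \<Rightarrow> nat) \<Rightarrow> (pt) list" where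
  "usl k = replicate (k 1) (exv 1) @ replicate (k 2) (exv 2) @ replicate (k 3) (exv 3)"

lemma unc_multi: "unc (multi dx k h) = iter_pdir (usl k) (unc h)"
  by (simp add: multi_def usl_def iter_pdir_append iter_pdir_replicate unc_funpow)

lemma usl_Basis: "set (usl k) \<subseteq> Basis"
  by (auto simp: usl_def exv_Basis)

lemma usl_sub: "set (usl k) \<subseteq> {exv 1, exv 2, exv 3}"
  by (auto simp: usl_def)

lemma line_has_deriv:
  assumes "H differentiable (at (p + s0 *\<^sub>R u))"
  shows "((\<lambda>s. H (p + s *\<^sub>R u)) has_real_derivative pdir H u (p + s0 *\<^sub>R u)) (at s0)"
proof -
  from assms obtain D where D: "(H has_derivative D) (at (p + s0 *\<^sub>R u))"
    by (auto simp: differentiable_def)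
  have lin: "linear D" using D by (rule has_derivative_linear)
  have gen: "((\<lambda>s. H (q + s *\<^sub>R u)) has_real_derivative D u) (at r)" if "q + r *\<^sub>R u = p + s0 *\<^sub>R u" for q r
  proof -
    have "((\<lambda>s. q + s *\<^sub>R u) has_derivative (\<lambda>s. s *\<^sub>R u)) (at r)"
      by (auto intro!: derivative_eq_intros)
    then have "((\<lambda>s. H (q + s *\<^sub>R u)) has_derivative (\<lambda>s. D (s *\<^sub>R u))) (at r)"
      using D that by (auto intro: has_derivative_compose[of "\<lambda>s. q + s *\<^sub>R u", unfolded o_def])
    moreover have "(\<lambda>s. D (s *\<^sub>R u)) = (\<lambda>s. s * D u)"
      using lin by (auto simp: linear_scale fun_eq_iff mult.commute)
    ultimately show ?thesis
      by (simp add: has_field_derivative_def mult.commute[of _ "D u"])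
  qed
  have "pdir H u (p + s0 *\<^sub>R u) = D u"
    unfolding pdir_def by (rule DERIV_imp_deriv) (rule gen, simp)
  then show ?thesis using gen[of p s0] by simp
qed

lemma smooth_diff_at:
  assumes "smooth_on S H" "open S" "p \<in> S" "set us \<subseteq> Basis"
  shows "iter_pdir us H differentiable (at p)"
  using assms unfolding smooth_on_def
  by (meson differentiable_on_eq_differentiable_at)

lemma smooth_cont:
  assumes "smooth_on S H" "set us \<subseteq> Basis"
  shows "continuous_on S (iter_pdir us H)"
  using assms unfolding smooth_on_def by blast

lemma iter_pdir_cmult:
  fixes H E :: "'a::euclidean_space \<Rightarrow> real"
  assumes sm: "smooth_on S H" and op: "open S" and V: "V \<subseteq> Basis"
    and line: "\<And>u p s. u \<in> V \<Longrightarrow> p \<in> S \<Longrightarrow> p + s *\<^sub>R u \<in> S \<and> E (p + s *\<^sub>R u) = E p"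
  shows "set us \<subseteq> V \<Longrightarrow> p \<in> S \<Longrightarrow> iter_pdir us (\<lambda>q. E q * H q) p = E p * iter_pdir us H p"
proof (induction us arbitrary: p)
  case Nil then show ?case by (simp add: iter_pdir_def)
next
  case (Cons u us)
  have uV: "u \<in> V" and usV: "set us \<subseteq> V" using Cons.prems by auto
  have eq: "(\<lambda>s. iter_pdir us (\<lambda>q. E q * H q) (p + s *\<^sub>R u)) = (\<lambda>s. E p * iter_pdir us H (p + s *\<^sub>R u))"
    using Cons.IH[OF usV] line[OF uV Cons.prems(2)] by auto
  have "iter_pdir us H differentiable (at (p + 0 *\<^sub>R u))"
    using smooth_diff_at[OF sm op _ order.trans[OF usV V]] Cons.prems(2) by simp
  then have d: "((\<lambda>s. iter_pdir us H (p + s *\<^sub>R u)) has_real_derivative pdir (iter_pdir us H) u (p + 0 *\<^sub>R u)) (at 0)"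
    by (rule line_has_deriv)
  have "iter_pdir (u # us) (\<lambda>q. E q * H q) p = deriv (\<lambda>s. E p * iter_pdir us H (p + s *\<^sub>R u)) 0"
    by (simp add: iter_pdir_Cons pdir_def eq)
  also have "\<dots> = E p * pdir (iter_pdir us H) u p"
    using d by (intro DERIV_imp_deriv) (auto intro!: derivative_eq_intros)
  finally show ?case by (simp add: iter_pdir_Cons)
qed

lemma sob1d:
  fixes \<phi> \<phi>' :: "real \<Rightarrow> real"
  assumes d: "\<And>s. (\<phi> has_real_derivative \<phi>' s) (at s)" and c: "continuous_on UNIV \<phi>'"
  shows "\<bar>\<phi> 0\<bar> \<le> integral {0..1} (\<lambda>s. \<bar>\<phi> s\<bar> + \<bar>\<phi>' s\<bar>)"
proof -
  have cphi: "continuous_on UNIV \<phi>"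
    using d by (meson DERIV_isCont continuous_at_imp_continuous_on)
  have cabs: "continuous_on {0..1} (\<lambda>s. \<bar>\<phi> s\<bar>)"
    using cphi by (auto intro!: continuous_intros intro: continuous_on_subset)
  obtain s0 where s0: "s0 \<in> {0..1}" and smin: "\<And>s. s \<in> {0..1} \<Longrightarrow> \<bar>\<phi> s0\<bar> \<le> \<bar>\<phi> s\<bar>"
    using continuous_attains_inf[OF compact_Icc _ cabs] by force
  have cd': "continuous_on {0..1} (\<lambda>s. \<bar>\<phi>' s\<bar>)" "continuous_on {0..s0} (\<lambda>s. \<bar>\<phi>' s\<bar>)"
    "continuous_on {0..s0} \<phi>'"
    using c by (auto intro!: continuous_intros intro: continuous_on_subset)
  have int1: "(\<lambda>s. \<bar>\<phi> s\<bar>) integrable_on {0..1}" using cabs by (rule integrable_continuous_interval)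
  have int2: "(\<lambda>s. \<bar>\<phi>' s\<bar>) integrable_on {0..1}" using cd'(1) by (rule integrable_continuous_interval)
  have int3: "(\<lambda>s. \<bar>\<phi>' s\<bar>) integrable_on {0..s0}" using cd'(2) by (rule integrable_continuous_interval)
  have int4: "\<phi>' integrable_on {0..s0}" using cd'(3) by (rule integrable_continuous_interval)
  have I1: "\<bar>\<phi> s0\<bar> \<le> integral {0..1} (\<lambda>s. \<bar>\<phi> s\<bar>)"
  proof -
    have "integral {0..1} (\<lambda>s::real. \<bar>\<phi> s0\<bar>) \<le> integral {0..1} (\<lambda>s. \<bar>\<phi> s\<bar>)"
      by (rule Henstock_Kurzweil_Integration.integral_le)
         (use smin int1 in \<open>auto intro: integrable_continuous_interval\<close>)
    then show ?thesis by simp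
  qed
  have ftc: "(\<phi>' has_integral (\<phi> s0 - \<phi> 0)) {0..s0}"
    using s0 d
    by (intro fundamental_theorem_of_calculus)
       (auto simp: has_real_derivative_iff_has_vector_derivative[symmetric] intro: has_field_derivative_at_within)
  have "\<bar>\<phi> s0 - \<phi> 0\<bar> = \<bar>integral {0..s0} \<phi>'\<bar>" using ftc by (simp add: integral_unique)
  also have "\<dots> \<le> integral {0..s0} (\<lambda>s. \<bar>\<phi>' s\<bar>)"
    using int4 int3 by (metis integral_norm_bound_integral order_refl real_norm_def)
  also have "\<dots> \<le> integral {0..1} (\<lambda>s. \<bar>\<phi>' s\<bar>)"
    using s0 int2 int3 by (intro integral_subset_le) auto
  finally have I2: "\<bar>\<phi> s0 - \<phi> 0\<bar> \<le> integral {0..1} (\<lambda>s. \<bar>\<phi>' s\<bar>)" .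
  have "integral {0..1} (\<lambda>s. \<bar>\<phi> s\<bar> + \<bar>\<phi>' s\<bar>) = integral {0..1} (\<lambda>s. \<bar>\<phi> s\<bar>) + integral {0..1} (\<lambda>s. \<bar>\<phi>' s\<bar>)"
    using int1 int2 by (rule integral_add)
  then show ?thesis using I1 I2 by linarith
qed

lemma sob1d_fam:
  fixes \<phi> \<phi>' :: "'i \<Rightarrow> real \<Rightarrow> real"
  assumes fin: "finite A"
    and d: "\<And>i s. i \<in> A \<Longrightarrow> (\<phi> i has_real_derivative \<phi>' i s) (at s)"
    and c: "\<And>i. i \<in> A \<Longrightarrow> continuous_on UNIV (\<phi>' i)"
  shows "ennreal (\<Sum>i\<in>A. \<bar>\<phi> i 0\<bar>) \<le>
     (\<integral>\<^sup>+s. ennreal (indicator {0..1} s * (\<Sum>i\<in>A. \<bar>\<phi> i s\<bar> + \<bar>\<phi>' i s\<bar>)) \<partial>lborel)"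
proof -
  have cphi: "continuous_on UNIV (\<phi> i)" if "i \<in> A" for i
    using d[OF that] by (meson DERIV_isCont continuous_at_imp_continuous_on)
  have cs: "continuous_on {0..1} (\<lambda>s. \<Sum>i\<in>A. \<bar>\<phi> i s\<bar> + \<bar>\<phi>' i s\<bar>)"
    using cphi c by (auto intro!: continuous_intros intro: continuous_on_subset)
  have ints: "(\<lambda>s. \<bar>\<phi> i s\<bar> + \<bar>\<phi>' i s\<bar>) integrable_on {0..1}" if "i \<in> A" for i
    using cphi[OF that] c[OF that]
    by (intro integrable_continuous_interval) (auto intro!: continuous_intros intro: continuous_on_subset)
  have hi: "((\<lambda>s. \<Sum>i\<in>A. \<bar>\<phi> i s\<bar> + \<bar>\<phi>' i s\<bar>) has_integral
      integral {0..1} (\<lambda>s. \<Sum>i\<in>A. \<bar>\<phi> i s\<bar> + \<bar>\<phi>' i s\<bar>)) {0..1}"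
    using cs by (intro integrable_integral integrable_continuous_interval)
  have "(\<Sum>i\<in>A. \<bar>\<phi> i 0\<bar>) \<le> (\<Sum>i\<in>A. integral {0..1} (\<lambda>s. \<bar>\<phi> i s\<bar> + \<bar>\<phi>' i s\<bar>))"
    using d c by (intro sum_mono sob1d) auto
  also have "\<dots> = integral {0..1} (\<lambda>s. \<Sum>i\<in>A. \<bar>\<phi> i s\<bar> + \<bar>\<phi>' i s\<bar>)"
    using ints by (simp add: integral_sum[OF fin])
  finally have le: "(\<Sum>i\<in>A. \<bar>\<phi> i 0\<bar>) \<le> integral {0..1} (\<lambda>s. \<Sum>i\<in>A. \<bar>\<phi> i s\<bar> + \<bar>\<phi>' i s\<bar>)" .
  have "(\<integral>\<^sup>+s. ennreal (indicator {0..1} s * (\<Sum>i\<in>A. \<bar>\<phi> i s\<bar> + \<bar>\<phi>' i s\<bar>)) \<partial>lborel)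
      = ennreal (integral {0..1} (\<lambda>s. \<Sum>i\<in>A. \<bar>\<phi> i s\<bar> + \<bar>\<phi>' i s\<bar>))"
    by (rule nn_integral_has_integral_lebesgue[OF _ hi]) (auto intro: sum_nonneg)
  then show ?thesis using le by (simp add: ennreal_leI)
qed

definition up :: "3 \<Rightarrow> (3 \<Rightarrow> nat) \<Rightarrow> (3 \<Rightarrow> nat)" where
  "up l k = k(l := 1)"

definition fam3 :: "(3 \<Rightarrow> nat) set" where "fam3 = {\<lambda>_. 0}"
definition fam2 :: "(3 \<Rightarrow> nat) set" where "fam2 = fam3 \<union> up 3 ` fam3"
definition fam1 :: "(3 \<Rightarrow> nat) set" where "fam1 = fam2 \<union> up 2 ` fam2"
definition fam0 :: "(3 \<Rightarrow> nat) set" where "fam0 = fam1 \<union> up 1 ` fam1"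

lemma fin_fams: "finite fam3" "finite fam2" "finite fam1" "finite fam0"
  by (auto simp: fam3_def fam2_def fam1_def fam0_def)

lemma fam3_prop: "k \<in> fam3 \<Longrightarrow> k 1 = 0 \<and> k 2 = 0 \<and> k 3 = 0"
  by (auto simp: fam3_def)
lemma fam2_prop: "k \<in> fam2 \<Longrightarrow> k 1 = 0 \<and> k 2 = 0"
  by (auto simp: fam2_def fam3_def up_def)
lemma fam1_prop: "k \<in> fam1 \<Longrightarrow> k 1 = 0"
  by (auto simp: fam1_def fam2_def fam3_def up_def)
lemma fam0_prop: "k \<in> fam0 \<Longrightarrow> k l \<le> 1"
  by (auto simp: fam0_def fam1_def fam2_def fam3_def up_def)
lemma card_fam0: "card fam0 \<le> 8"
proof -
  have c: "card (F \<union> up l ` F) \<le> 2 * card F" if "finite F" for F l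
    using card_Un_le[of F "up l ` F"] card_image_le[OF that, of "up l"] by linarith
  have "card fam3 = 1" by (simp add: fam3_def)
  then have "card fam2 \<le> 2" using c[OF fin_fams(1), of 3] by (simp add: fam2_def)
  then have "card fam1 \<le> 4" using c[OF fin_fams(2), of 2] by (simp add: fam1_def)
  then show ?thesis using c[OF fin_fams(3), of 1] by (simp add: fam0_def)
qed

lemma sum_up:
  assumes "finite A" "\<And>k. k \<in> A \<Longrightarrow> k l = 0"
  shows "(\<Sum>k\<in>A. a k + a (up l k)) = (\<Sum>k\<in>A \<union> up l ` A. a k)"
proof -
  have inj: "inj_on (up l) A"
    by (rule inj_onI) (metis assms(2) fun_upd_triv fun_upd_upd up_def)
  have disj: "A \<inter> up l ` A = {}"
    using assms(2) by (auto simp: up_def) (metis fun_upd_same Zero_not_Suc)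
  have "(\<Sum>k\<in>A \<union> up l ` A. a k) = (\<Sum>k\<in>A. a k) + (\<Sum>k\<in>up l ` A. a k)"
    using assms(1) disj by (intro sum.union_disjoint) auto
  also have "(\<Sum>k\<in>up l ` A. a k) = (\<Sum>k\<in>A. a (up l k))"
    using inj by (simp add: sum.reindex)
  finally show ?thesis by (simp add: sum.distrib)
qed

lemma sob_step:
  fixes U :: "(3 \<Rightarrow> nat) \<Rightarrow> real^3 \<Rightarrow> real"
  assumes fin: "finite A" and z: "\<And>k. k \<in> A \<Longrightarrow> k l = 0"
    and d: "\<And>k s. k \<in> A \<Longrightarrow> ((\<lambda>r. U k (p + r *\<^sub>R axis l 1)) has_real_derivative U (up l k) (p + s *\<^sub>R axis l 1)) (at s)"
    and c: "\<And>k. continuous_on UNIV (U k)"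
  shows "ennreal (\<Sum>k\<in>A. \<bar>U k p\<bar>) \<le>
     (\<integral>\<^sup>+r. ennreal (indicator {0..1} r * (\<Sum>k\<in>A \<union> up l ` A. \<bar>U k (p + r *\<^sub>R axis l 1)\<bar>)) \<partial>lborel)"
proof -
  have cc: "continuous_on UNIV (\<lambda>r. U k (p + r *\<^sub>R axis l 1))" for k
    using c[of k] by (auto intro!: continuous_on_compose2[of UNIV "U k"] continuous_intros)
  have "ennreal (\<Sum>k\<in>A. \<bar>U k (p + 0 *\<^sub>R axis l 1)\<bar>) \<le>
     (\<integral>\<^sup>+r. ennreal (indicator {0..1} r * (\<Sum>k\<in>A. \<bar>U k (p + r *\<^sub>R axis l 1)\<bar> + \<bar>U (up l k) (p + r *\<^sub>R axis l 1)\<bar>)) \<partial>lborel)"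
    by (rule sob1d_fam[OF fin, of "\<lambda>k r. U k (p + r *\<^sub>R axis l 1)" "\<lambda>k r. U (up l k) (p + r *\<^sub>R axis l 1)"])
       (use d cc in auto)
  also have "\<dots> = (\<integral>\<^sup>+r. ennreal (indicator {0..1} r * (\<Sum>k\<in>A \<union> up l ` A. \<bar>U k (p + r *\<^sub>R axis l 1)\<bar>)) \<partial>lborel)"
  proof -
    have "(\<Sum>k\<in>A. \<bar>U k (p + r *\<^sub>R axis l 1)\<bar> + \<bar>U (up l k) (p + r *\<^sub>R axis l 1)\<bar>)
       = (\<Sum>k\<in>A \<union> up l ` A. \<bar>U k (p + r *\<^sub>R axis l 1)\<bar>)" for r
      by (rule sum_up[OF fin z])
    then show ?thesis by simp
  qed
  finally show ?thesis by simp
qed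

lemma ennreal_ind_mult: "ennreal (indicator S r * x) = ennreal (indicator S r) * ennreal x"
  by (auto simp: indicator_def)

lemma sob3d:
  fixes U :: "(3 \<Rightarrow> nat) \<Rightarrow> real^3 \<Rightarrow> real"
  assumes c: "\<And>k. continuous_on UNIV (U k)"
    and d3: "\<And>k y s. k 1 = 0 \<Longrightarrow> k 2 = 0 \<Longrightarrow> k 3 = 0 \<Longrightarrow>
        ((\<lambda>r. U k (y + r *\<^sub>R axis 3 1)) has_real_derivative U (up 3 k) (y + s *\<^sub>R axis 3 1)) (at s)"
    and d2: "\<And>k y s. k 1 = 0 \<Longrightarrow> k 2 = 0 \<Longrightarrow>
        ((\<lambda>r. U k (y + r *\<^sub>R axis 2 1)) has_real_derivative U (up 2 k) (y + s *\<^sub>R axis 2 1)) (at s)"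
    and d1: "\<And>k y s. k 1 = 0 \<Longrightarrow>
        ((\<lambda>r. U k (y + r *\<^sub>R axis 1 1)) has_real_derivative U (up 1 k) (y + s *\<^sub>R axis 1 1)) (at s)"
  shows "ennreal \<bar>U (\<lambda>_. 0) x\<bar> \<le>
    (\<integral>\<^sup>+c. ennreal (indicator {0..1} c) * (\<integral>\<^sup>+b. ennreal (indicator {0..1} b) *
      (\<integral>\<^sup>+a. ennreal (indicator {0..1} a *
         (\<Sum>k\<in>fam0. \<bar>U k (x + c *\<^sub>R axis 3 1 + b *\<^sub>R axis 2 1 + a *\<^sub>R axis 1 1)\<bar>)) \<partial>lborel) \<partial>lborel) \<partial>lborel)"
proof -
  have s3: "ennreal (\<Sum>k\<in>fam3. \<bar>U k x\<bar>) \<le>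
     (\<integral>\<^sup>+c. ennreal (indicator {0..1} c * (\<Sum>k\<in>fam2. \<bar>U k (x + c *\<^sub>R axis 3 1)\<bar>)) \<partial>lborel)"
    unfolding fam2_def
    by (rule sob_step[OF fin_fams(1)]) (auto dest: fam3_prop intro!: d3 c)
  have s2: "ennreal (\<Sum>k\<in>fam2. \<bar>U k q\<bar>) \<le>
     (\<integral>\<^sup>+b. ennreal (indicator {0..1} b * (\<Sum>k\<in>fam1. \<bar>U k (q + b *\<^sub>R axis 2 1)\<bar>)) \<partial>lborel)" for q
    unfolding fam1_def
    by (rule sob_step[OF fin_fams(2)]) (auto dest: fam2_prop intro!: d2 c)
  have s1: "ennreal (\<Sum>k\<in>fam1. \<bar>U k q\<bar>) \<le>
     (\<integral>\<^sup>+a. ennreal (indicator {0..1} a * (\<Sum>k\<in>fam0. \<bar>U k (q + a *\<^sub>R axis 1 1)\<bar>)) \<partial>lborel)" for q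
    unfolding fam0_def
    by (rule sob_step[OF fin_fams(3)]) (auto dest: fam1_prop intro!: d1 c)
  have "ennreal \<bar>U (\<lambda>_. 0) x\<bar> = ennreal (\<Sum>k\<in>fam3. \<bar>U k x\<bar>)" by (simp add: fam3_def)
  also have "\<dots> \<le> (\<integral>\<^sup>+c. ennreal (indicator {0..1} c) * ennreal (\<Sum>k\<in>fam2. \<bar>U k (x + c *\<^sub>R axis 3 1)\<bar>) \<partial>lborel)"
    using s3 by (simp add: ennreal_ind_mult)
  also have "\<dots> \<le> (\<integral>\<^sup>+c. ennreal (indicator {0..1} c) * (\<integral>\<^sup>+b. ennreal (indicator {0..1} b) *
       ennreal (\<Sum>k\<in>fam1. \<bar>U k (x + c *\<^sub>R axis 3 1 + b *\<^sub>R axis 2 1)\<bar>) \<partial>lborel) \<partial>lborel)"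
    using s2 by (intro nn_integral_mono mult_left_mono) (auto simp: ennreal_ind_mult)
  also have "\<dots> \<le> (\<integral>\<^sup>+c. ennreal (indicator {0..1} c) * (\<integral>\<^sup>+b. ennreal (indicator {0..1} b) *
      (\<integral>\<^sup>+a. ennreal (indicator {0..1} a *
         (\<Sum>k\<in>fam0. \<bar>U k (x + c *\<^sub>R axis 3 1 + b *\<^sub>R axis 2 1 + a *\<^sub>R axis 1 1)\<bar>)) \<partial>lborel) \<partial>lborel) \<partial>lborel)"
    using s1 by (intro nn_integral_mono mult_left_mono) auto
  finally show ?thesis .
qed

definition T3 :: "real \<times> (real \<times> real) \<Rightarrow> real^3" where
  "T3 p = fst p *\<^sub>R axis 3 1 + fst (snd p) *\<^sub>R axis 2 1 + snd (snd p) *\<^sub>R axis 1 1"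

lemma T3_comp: "T3 (c, b, a) $ 1 = a" "T3 (c, b, a) $ 2 = b" "T3 (c, b, a) $ 3 = c"
  by (simp_all add: T3_def axis_def)

lemma T3_meas: "T3 \<in> borel_measurable (lborel \<Otimes>\<^sub>M (lborel \<Otimes>\<^sub>M lborel))"
  unfolding T3_def by (intro borel_measurable_add borel_measurable_scaleR) auto

lemma pre: "T3 -` box l u \<inter> space (lborel \<Otimes>\<^sub>M (lborel \<Otimes>\<^sub>M lborel)) =
      {l$3<..<u$3} \<times> ({l$2<..<u$2} \<times> {l$1<..<u$1})"
  proof -
    have "T3 (c, b, a) \<in> box l u \<longleftrightarrow> c \<in> {l$3<..<u$3} \<and> b \<in> {l$2<..<u$2} \<and> a \<in> {l$1<..<u$1}" for a b c
      unfolding mem_box_cart forall_3 T3_comp by auto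
    then show ?thesis by (auto simp: space_pair_measure)
  qed
lemma Basis_cart3: "(Basis :: (real^3) set) = (\<lambda>i. axis i 1) ` UNIV"
  by (auto simp: Basis_vec_def Basis_real_def)

lemma le3: fixes l u :: "real^3" assumes lu: "\<And>b. b \<in> Basis \<Longrightarrow> l \<bullet> b \<le> u \<bullet> b" shows "l$i \<le> u$(i::3)"
  proof -
    have "axis i (1::real) \<in> Basis" unfolding Basis_cart3 by blast
    from lu[OF this] show ?thesis by (simp add: cart_eq_inner_axis)
  qed

lemma em3: fixes a1 b1 a2 b2 a3 b3 :: real shows "emeasure (lborel \<Otimes>\<^sub>M (lborel \<Otimes>\<^sub>M lborel)) ({a1<..<b1} \<times> ({a2<..<b2} \<times> {a3<..<b3::real}))
   = emeasure lborel {a1<..<b1} * (emeasure lborel {a2<..<b2} * emeasure lborel {a3<..<b3})"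
  proof -
    have sf: "sigma_finite_measure (lborel \<Otimes>\<^sub>M (lborel :: real measure))"
      by (simp add: lborel_prod sigma_finite_lborel)
    have "emeasure (lborel \<Otimes>\<^sub>M (lborel \<Otimes>\<^sub>M lborel)) ({a1<..<b1} \<times> ({a2<..<b2} \<times> {a3<..<b3}))
       = emeasure lborel {a1<..<b1} * emeasure (lborel \<Otimes>\<^sub>M lborel) ({a2<..<b2} \<times> {a3<..<b3})"
      by (rule sigma_finite_measure.emeasure_pair_measure_Times[OF sf]) (auto intro!: pair_measureI)
    also have "emeasure (lborel \<Otimes>\<^sub>M lborel) ({a2<..<b2} \<times> {a3<..<b3}) = emeasure lborel {a2<..<b2} * emeasure lborel {a3<..<b3}"
      by (rule lborel.emeasure_pair_measure_Times) auto
    finally show ?thesis .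
  qed
lemma p3: "prod f (UNIV::3 set) = f 1 * f 2 * f 3"
  unfolding UNIV_3 by (simp add: ac_simps)
lemma prod_Basis_cart: "(\<Prod>b\<in>Basis. (x::real^3) \<bullet> b) = x$1 * x$2 * x$3"
proof -
  have inj: "inj (\<lambda>i::3. axis i (1::real))"
    by (rule injI) (simp add: axis_eq_axis)
  have "(\<Prod>b\<in>Basis. (x::real^3) \<bullet> b) = (\<Prod>i\<in>UNIV. x \<bullet> axis i 1)"
    unfolding Basis_cart3 prod.reindex[OF inj] by simp
  also have "\<dots> = (\<Prod>i\<in>UNIV. x $ i)" by (simp add: inner_axis)
  finally show ?thesis by (simp add: p3)
qed

lemma distr_T3: "distr (lborel \<Otimes>\<^sub>M (lborel \<Otimes>\<^sub>M lborel)) borel T3 = lborel"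
proof (rule lborel_eqI[symmetric])
  fix l u :: "real^3"
  assume lu: "\<And>b. b \<in> Basis \<Longrightarrow> l \<bullet> b \<le> u \<bullet> b"
  have "emeasure (distr (lborel \<Otimes>\<^sub>M (lborel \<Otimes>\<^sub>M lborel)) borel T3) (box l u)
      = emeasure (lborel \<Otimes>\<^sub>M (lborel \<Otimes>\<^sub>M lborel)) ({l$3<..<u$3} \<times> ({l$2<..<u$2} \<times> {l$1<..<u$1}))"
    by (subst emeasure_distr[OF T3_meas]) (auto simp: pre)
  also have "\<dots> = ennreal (u$3 - l$3) * (ennreal (u$2 - l$2) * ennreal (u$1 - l$1))"
    using le3[OF lu] by (simp add: em3)
  also have "\<dots> = ennreal (\<Prod>b\<in>Basis. (u - l) \<bullet> b)"
    using le3[OF lu] by (simp add: prod_Basis_cart ennreal_mult' mult_ac)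
  finally show "emeasure (distr (lborel \<Otimes>\<^sub>M (lborel \<Otimes>\<^sub>M lborel)) borel T3) (box l u) = (\<Prod>b\<in>Basis. (u - l) \<bullet> b)"
    by simp
qed simp
lemma lborel3:
  fixes \<Xi> :: "real^3 \<Rightarrow> ennreal"
  assumes m: "\<Xi> \<in> borel_measurable borel"
  shows "(\<integral>\<^sup>+y. \<Xi> y \<partial>lborel) = (\<integral>\<^sup>+c. \<integral>\<^sup>+b. \<integral>\<^sup>+a. \<Xi> (c *\<^sub>R axis 3 1 + b *\<^sub>R axis 2 1 + a *\<^sub>R axis 1 1) \<partial>lborel \<partial>lborel \<partial>lborel)"
proof -
  have m': "(\<lambda>p. \<Xi> (T3 p)) \<in> borel_measurable (lborel \<Otimes>\<^sub>M (lborel \<Otimes>\<^sub>M lborel))"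
    using measurable_comp[OF T3_meas m] by (simp add: o_def)
  have "(\<integral>\<^sup>+y. \<Xi> y \<partial>lborel) = (\<integral>\<^sup>+p. \<Xi> (T3 p) \<partial>(lborel \<Otimes>\<^sub>M (lborel \<Otimes>\<^sub>M lborel)))"
    by (subst distr_T3[symmetric]) (simp add: nn_integral_distr[OF T3_meas] m)
  also have "\<dots> = (\<integral>\<^sup>+c. \<integral>\<^sup>+q. \<Xi> (T3 (c, q)) \<partial>(lborel \<Otimes>\<^sub>M lborel) \<partial>lborel)"
    using m' by (subst lborel_pair.nn_integral_fst[symmetric]) auto
  also have "\<dots> = (\<integral>\<^sup>+c. \<integral>\<^sup>+b. \<integral>\<^sup>+a. \<Xi> (T3 (c, b, a)) \<partial>lborel \<partial>lborel \<partial>lborel)"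
  proof (rule nn_integral_cong)
    fix c :: real
    have "(\<lambda>q. \<Xi> (T3 (c, q))) \<in> borel_measurable (lborel \<Otimes>\<^sub>M lborel)"
      using m' by measurable
    from lborel.nn_integral_fst[OF this]
    show "(\<integral>\<^sup>+q. \<Xi> (T3 (c, q)) \<partial>(lborel \<Otimes>\<^sub>M lborel)) = (\<integral>\<^sup>+b. \<integral>\<^sup>+a. \<Xi> (T3 (c, b, a)) \<partial>lborel \<partial>lborel)"
      by simp
  qed
  finally show ?thesis by (simp add: T3_def)
qed

definition Qc :: "real^3 \<Rightarrow> (real^3) set" where
  "Qc x = {y. \<forall>i. x$i \<le> y$i \<and> y$i \<le> x$i + 1}"

lemma Qc_cbox: "Qc x = cbox x (x + vec 1)"
  by (auto simp: Qc_def mem_box_cart)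

lemma Qc_sets[measurable]: "Qc x \<in> sets borel"
  unfolding Qc_cbox by (rule borel_closed) (rule closed_cbox)

lemma ind_lt_top: "ennreal (indicator A x) < top"
  by (simp add: indicator_def)

lemma cube3:
  fixes \<Phi> :: "real^3 \<Rightarrow> ennreal"
  assumes m: "\<Phi> \<in> borel_measurable borel"
  shows "(\<integral>\<^sup>+c. ennreal (indicator {0..1} c) * (\<integral>\<^sup>+b. ennreal (indicator {0..1} b) *
      (\<integral>\<^sup>+a. ennreal (indicator {0..1} a) * \<Phi> (x + c *\<^sub>R axis 3 1 + b *\<^sub>R axis 2 1 + a *\<^sub>R axis 1 1) \<partial>lborel) \<partial>lborel) \<partial>lborel)
    = (\<integral>\<^sup>+y. ennreal (indicator (Qc x) y) * \<Phi> y \<partial>lborel)"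
proof -
  define G where "G y = ennreal (indicator (Qc x) y) * \<Phi> y" for y
  have mG: "G \<in> borel_measurable borel" unfolding G_def using m by measurable
  have "(\<integral>\<^sup>+y. G y \<partial>lborel) = (\<integral>\<^sup>+y. G (x + y) \<partial>lborel)"
  proof -
    have "(\<integral>\<^sup>+y. G y \<partial>lborel) = (\<integral>\<^sup>+y. G y \<partial>(distr lborel borel ((+) x)))"
      by (simp add: lborel_distr_plus)
    also have "\<dots> = (\<integral>\<^sup>+y. G (x + y) \<partial>lborel)"
    proof (rule nn_integral_distr)
      show "(+) x \<in> lborel \<rightarrow>\<^sub>M borel" by simp
      show "G \<in> borel_measurable (distr lborel borel ((+) x))" using mG by simp
    qed
    finally show ?thesis .
  qed
  also have "\<dots> = (\<integral>\<^sup>+c. \<integral>\<^sup>+b. \<integral>\<^sup>+a. G (x + (c *\<^sub>R axis 3 1 + b *\<^sub>R axis 2 1 + a *\<^sub>R axis 1 1)) \<partial>lborel \<partial>lborel \<partial>lborel)"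
  proof (rule lborel3)
    have "(\<lambda>y. x + y) \<in> borel_measurable borel"
      by (intro borel_measurable_continuous_onI continuous_intros)
    then show "(\<lambda>y. G (x + y)) \<in> borel_measurable borel"
      using mG by (rule measurable_compose)
  qed
  also have "\<dots> = (\<integral>\<^sup>+c. ennreal (indicator {0..1} c) * (\<integral>\<^sup>+b. ennreal (indicator {0..1} b) *
      (\<integral>\<^sup>+a. ennreal (indicator {0..1} a) * \<Phi> (x + c *\<^sub>R axis 3 1 + b *\<^sub>R axis 2 1 + a *\<^sub>R axis 1 1) \<partial>lborel) \<partial>lborel) \<partial>lborel)"
  proof (rule nn_integral_cong)
    fix c :: real
    show "(\<integral>\<^sup>+b. \<integral>\<^sup>+a. G (x + (c *\<^sub>R axis 3 1 + b *\<^sub>R axis 2 1 + a *\<^sub>R axis 1 1)) \<partial>lborel \<partial>lborel) =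
      ennreal (indicator {0..1} c) * (\<integral>\<^sup>+b. ennreal (indicator {0..1} b) *
      (\<integral>\<^sup>+a. ennreal (indicator {0..1} a) * \<Phi> (x + c *\<^sub>R axis 3 1 + b *\<^sub>R axis 2 1 + a *\<^sub>R axis 1 1) \<partial>lborel) \<partial>lborel)"
    proof -
      have Geq: "G (x + (c *\<^sub>R axis 3 1 + b *\<^sub>R axis 2 1 + a *\<^sub>R axis 1 1)) =
          ennreal (indicator {0..1} c) * (ennreal (indicator {0..1} b) *
          (ennreal (indicator {0..1} a) * \<Phi> (x + c *\<^sub>R axis 3 1 + b *\<^sub>R axis 2 1 + a *\<^sub>R axis 1 1)))" for a b
      proof -
        have "x + (c *\<^sub>R axis 3 1 + b *\<^sub>R axis 2 1 + a *\<^sub>R axis 1 1) \<in> Qc x \<longleftrightarrow> a \<in> {0..1} \<and> b \<in> {0..1} \<and> c \<in> {0..1}"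
          unfolding Qc_def forall_3 by (simp add: axis_def)
        then show ?thesis by (auto simp: G_def indicator_def add.assoc)
      qed
      show ?thesis
        unfolding Geq
        by (simp add: nn_integral_cmult_gen[OF ind_lt_top])
    qed
  qed
  finally show ?thesis by (simp add: G_def)
qed

lemma emeasure_Qc: "(\<integral>\<^sup>+y. ennreal (indicator (Qc x) y) * c \<partial>lborel) = c"
proof -
  have "(\<integral>\<^sup>+y. ennreal (indicator (Qc x) y) * c \<partial>lborel) =
    (\<integral>\<^sup>+(c'::real). ennreal (indicator {0..1} c') * (\<integral>\<^sup>+(b::real). ennreal (indicator {0..1} b) *
      (\<integral>\<^sup>+(a::real). ennreal (indicator {0..1} a) * c \<partial>lborel) \<partial>lborel) \<partial>lborel)"
  proof -
    have h: "(\<integral>\<^sup>+(c'::real). ennreal (indicator {0..1} c') * (\<integral>\<^sup>+(b::real). ennreal (indicator {0..1} b) *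
      (\<integral>\<^sup>+(a::real). ennreal (indicator {0..1} a) * c \<partial>lborel) \<partial>lborel) \<partial>lborel) =
      (\<integral>\<^sup>+y. ennreal (indicator (Qc x) y) * c \<partial>lborel)"
      using cube3[of "\<lambda>_. c" x] by simp
    then show ?thesis by (rule sym)
  qed
  also have "(\<integral>\<^sup>+(a::real). ennreal (indicator {0..1} a) * c \<partial>lborel) = c"
    by (simp add: nn_integral_cmult_indicator mult.commute ennreal_indicator nn_integral_cmult[symmetric])
  finally show ?thesis
    by (simp add: nn_integral_cmult_indicator mult.commute ennreal_indicator nn_integral_cmult[symmetric])
qed

lemma jb_ge1: "1 \<le> jb z"
  by (simp add: jb_def)
lemma jb_pos: "0 < jb z"
  using jb_ge1[of z] by linarith
lemma norm_le_jb: "norm z \<le> jb z"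
  unfolding jb_def by (rule real_le_rsqrt) simp
lemma jb_le: "jb z \<le> 1 + norm z"
  unfolding jb_def by (rule real_sqrt_le_iff[THEN iffD2, of _ "(1 + norm z)^2", simplified]) (simp add: power2_eq_square algebra_simps)

lemma acoef_bound: "\<bar>acoef \<gamma> i j z\<bar> \<le> 2 * norm z powr (\<gamma> + 2)"
proof (cases "z = 0")
  case True then show ?thesis by (simp add: acoef_def)
next
  case False
  have n: "0 < norm z" using False by simp
  have ci: "\<bar>z$i\<bar> \<le> norm z" and cj: "\<bar>z$j\<bar> \<le> norm z" by (simp_all add: component_le_norm_cart)
  have "\<bar>z$i * z$j\<bar> \<le> norm z * norm z"
    using ci cj by (simp add: abs_mult mult_mono)
  then have q: "\<bar>z$i * z$j / (norm z)\<^sup>2\<bar> \<le> 1"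
    using n by (simp add: abs_divide power2_eq_square divide_le_eq_1)
  have "\<bar>(if i = j then 1 else 0) - z$i * z$j / (norm z)\<^sup>2\<bar> \<le> 2"
    using q by (auto simp: abs_if split: if_splits)
  then have "\<bar>(if i = j then 1 else 0) - z$i * z$j / (norm z)\<^sup>2\<bar> * norm z powr (\<gamma> + 2) \<le> 2 * norm z powr (\<gamma> + 2)"
    by (rule mult_right_mono) simp
  then show ?thesis by (simp add: acoef_def abs_mult)
qed

lemma sum_le_2prod: assumes "1 \<le> (a::real)" "1 \<le> b" shows "a + b \<le> 2 * a * b"
proof -
  have "0 \<le> (a - 1) * (b - 1)" using assms by simp
  moreover have "1 \<le> a * b" using assms mult_mono[of 1 a 1 b] by simp
  ultimately show ?thesis by (simp add: algebra_simps)
qed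

lemma key_geom:
  fixes v w x :: "real^3" and t \<gamma> :: real
  assumes t: "0 \<le> t" and g: "0 \<le> \<gamma>" "\<gamma> < 1"
  shows "(1 + t) * norm (v - w) powr (\<gamma> + 2) \<le>
     8 * (jb v)\<^sup>2 * (jb w)\<^sup>2 * jb (x - (t + 1) *\<^sub>R v) * jb (x - (t + 1) *\<^sub>R w)"
proof (cases "v = w")
  case True
  have "0 \<le> 8 * (jb v)\<^sup>2 * (jb w)\<^sup>2 * jb (x - (t + 1) *\<^sub>R v) * jb (x - (t + 1) *\<^sub>R w)"
    using jb_pos by (intro mult_nonneg_nonneg) (auto intro: less_imp_le)
  then show ?thesis using True by simp
next
  case False
  define r where "r = norm (v - w)"
  have r: "0 < r" using False by (simp add: r_def)
  have "(1 + t) * r = norm ((x - (t + 1) *\<^sub>R w) - (x - (t + 1) *\<^sub>R v))"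
  proof -
    have "(x - (t + 1) *\<^sub>R w) - (x - (t + 1) *\<^sub>R v) = (t + 1) *\<^sub>R (v - w)"
      by (simp add: algebra_simps)
    then show ?thesis using t by (simp add: r_def)
  qed
  also have "\<dots> \<le> norm (x - (t + 1) *\<^sub>R w) + norm (x - (t + 1) *\<^sub>R v)"
    by (rule norm_triangle_ineq4)
  also have "\<dots> \<le> jb (x - (t + 1) *\<^sub>R v) + jb (x - (t + 1) *\<^sub>R w)"
    using norm_le_jb by (smt (verit))
  also have "\<dots> \<le> 2 * jb (x - (t + 1) *\<^sub>R v) * jb (x - (t + 1) *\<^sub>R w)"
    by (rule sum_le_2prod) (rule jb_ge1)+
  finally have A: "(1 + t) * r \<le> 2 * jb (x - (t + 1) *\<^sub>R v) * jb (x - (t + 1) *\<^sub>R w)" .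
  define m where "m = 2 * jb v * jb w"
  have m1: "1 \<le> m"
  proof -
    have "1 * 1 \<le> jb v * jb w" using jb_ge1[of v] jb_ge1[of w] by (intro mult_mono) auto
    then show ?thesis by (simp add: m_def)
  qed
  have "r \<le> norm v + norm w" unfolding r_def by (rule norm_triangle_ineq4)
  also have "\<dots> \<le> jb v + jb w" using norm_le_jb by (smt (verit))
  also have "\<dots> \<le> m" unfolding m_def by (rule sum_le_2prod) (rule jb_ge1)+
  finally have rm: "r \<le> m" .
  have "r powr (\<gamma> + 1) \<le> m powr (\<gamma> + 1)"
    using r rm g by (intro powr_mono2) auto
  also have "\<dots> \<le> m powr 2"
    using m1 g by (intro powr_mono) auto
  also have "\<dots> = 4 * (jb v)\<^sup>2 * (jb w)\<^sup>2"
    using m1 by (simp add: m_def powr_numeral power_mult_distrib)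
  finally have B: "r powr (\<gamma> + 1) \<le> 4 * (jb v)\<^sup>2 * (jb w)\<^sup>2" .
  have "(1 + t) * r powr (\<gamma> + 2) = r powr (\<gamma> + 1) * ((1 + t) * r)"
    using r by (simp add: powr_add[symmetric] add_ac mult_ac powr_add power2_eq_square)
  also have "\<dots> \<le> (4 * (jb v)\<^sup>2 * (jb w)\<^sup>2) * (2 * jb (x - (t + 1) *\<^sub>R v) * jb (x - (t + 1) *\<^sub>R w))"
    by (rule mult_mono[OF B A]) (use r t in auto)
  finally show ?thesis by (simp add: r_def mult_ac)
qed

lemma peetre:
  assumes "norm (z - z') \<le> 3"
  shows "jb z \<le> 5 * jb z'"
proof -
  have "jb z \<le> 1 + norm z" by (rule jb_le)
  also have "\<dots> \<le> 1 + norm z' + 3" using assms norm_triangle_ineq2[of z z'] by linarith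
  also have "\<dots> \<le> 5 * jb z'" using norm_le_jb[of z'] jb_ge1[of z'] by linarith
  finally show ?thesis .
qed

definition hcau :: "real \<Rightarrow> real" where "hcau s = 1 / (1 + s\<^sup>2)"

lemma hcau_pos: "0 < hcau s" by (simp add: hcau_def add_pos_nonneg)

lemma hcau_meas[measurable]: "hcau \<in> borel_measurable borel"
  unfolding hcau_def by measurable

lemma hcau_half: "(\<integral>\<^sup>+x. ennreal (hcau x) * indicator {0..} x \<partial>lborel) = ennreal (pi / 2)"
proof -
  have "(\<integral>\<^sup>+x. ennreal (hcau x) * indicator {0..} x \<partial>lborel) = ennreal (pi / 2 - arctan 0)"
  proof (rule nn_integral_FTC_atLeast)
    show "(arctan \<longlongrightarrow> pi / 2) at_top" by (rule tendsto_arctan_at_top)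
    show "DERIV arctan x :> hcau x" for x
      unfolding hcau_def using DERIV_arctan[of x] by (simp add: divide_inverse)
    show "0 \<le> hcau x" for x using hcau_pos[of x] by simp
  qed simp
  then show ?thesis by simp
qed

lemma hcau_int: "(\<integral>\<^sup>+x. ennreal (hcau x) \<partial>lborel) \<le> ennreal pi"
proof -
  have "(\<integral>\<^sup>+x. ennreal (hcau x) \<partial>lborel) \<le>
      (\<integral>\<^sup>+x. ennreal (hcau x) * indicator {0..} x + ennreal (hcau x) * indicator {..0} x \<partial>lborel)"
    by (intro nn_integral_mono) (auto split: split_indicator)
  also have "\<dots> = (\<integral>\<^sup>+x. ennreal (hcau x) * indicator {0..} x \<partial>lborel) + (\<integral>\<^sup>+x. ennreal (hcau x) * indicator {..0} x \<partial>lborel)"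
    by (rule nn_integral_add) measurable
  also have "(\<integral>\<^sup>+x. ennreal (hcau x) * indicator {..0} x \<partial>lborel) = (\<integral>\<^sup>+x. ennreal (hcau x) * indicator {0..} x \<partial>lborel)"
  proof -
    have "(\<integral>\<^sup>+x. ennreal (hcau x) * indicator {..0} x \<partial>lborel) =
       ennreal \<bar>-1::real\<bar> * (\<integral>\<^sup>+x. ennreal (hcau (0 + -1 * x)) * indicator {..0} (0 + -1 * x) \<partial>lborel)"
    proof (rule nn_integral_real_affine)
      show "(\<lambda>x. ennreal (hcau x) * indicator {..0} x) \<in> borel_measurable borel" by measurable
    qed simp
    also have "\<dots> = (\<integral>\<^sup>+x. ennreal (hcau x) * indicator {0..} x \<partial>lborel)"
      by (simp, intro nn_integral_cong) (auto simp: hcau_def split: split_indicator)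
    finally show ?thesis .
  qed
  finally show ?thesis by (simp add: hcau_half ennreal_plus[symmetric] del: ennreal_plus)
qed

lemma jb_m6: "jb w powr (-6) \<le> hcau (w$1) * hcau (w$2) * hcau (w$3)"
proof -
  have n: "(norm w)\<^sup>2 = (w$1)\<^sup>2 + (w$2)\<^sup>2 + (w$3)\<^sup>2"
    unfolding norm_vec_def L2_set_def
    by (simp add: sum_3 real_norm_def)
  have A: "(1 + (w$1)\<^sup>2) * (1 + (w$2)\<^sup>2) * (1 + (w$3)\<^sup>2) \<le> (1 + (norm w)\<^sup>2) ^ 3"
  proof -
    have "(1 + (w$1)\<^sup>2) * (1 + (w$2)\<^sup>2) * (1 + (w$3)\<^sup>2) \<le> (1 + (norm w)\<^sup>2) * (1 + (norm w)\<^sup>2) * (1 + (norm w)\<^sup>2)"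
      using n by (intro mult_mono) (auto simp: add_nonneg_nonneg)
    then show ?thesis by (simp add: power3_eq_cube)
  qed
  have "jb w powr (-6) = 1 / (1 + (norm w)\<^sup>2) ^ 3"
  proof -
    have "jb w powr (-6) = 1 / jb w powr 6" by (simp add: powr_minus divide_inverse)
    also have "jb w powr 6 = jb w ^ 6" using jb_pos[of w] powr_realpow[of "jb w" 6] by simp
    also have "jb w ^ 6 = (jb w ^ 2) ^ 3" by (simp flip: power_mult)
    also have "jb w ^ 2 = 1 + (norm w)\<^sup>2" by (simp add: jb_def)
    finally show ?thesis .
  qed
  also have "\<dots> \<le> 1 / ((1 + (w$1)\<^sup>2) * (1 + (w$2)\<^sup>2) * (1 + (w$3)\<^sup>2))"
    using A by (intro divide_left_mono) (auto intro!: mult_pos_pos add_pos_nonneg)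
  also have "\<dots> = hcau (w$1) * hcau (w$2) * hcau (w$3)"
    by (simp add: hcau_def)
  finally show ?thesis .
qed

lemma I6_fin: "(\<integral>\<^sup>+(w::real^3). ennreal (jb w powr (-6)) \<partial>lborel) \<le> ennreal (pi ^ 3)"
proof -
  have "(\<integral>\<^sup>+(w::real^3). ennreal (jb w powr (-6)) \<partial>lborel) \<le>
      (\<integral>\<^sup>+(w::real^3). (\<Prod>b\<in>Basis. ennreal (hcau (w \<bullet> b))) \<partial>lborel)"
  proof (rule nn_integral_mono)
    fix w :: "real^3"
    have "(\<Prod>b\<in>Basis. ennreal (hcau (w \<bullet> b))) = ennreal (\<Prod>b\<in>Basis. hcau (w \<bullet> b))"
      by (simp add: prod_ennreal hcau_pos less_imp_le)
    also have "(\<Prod>b\<in>Basis. hcau (w \<bullet> b)) = hcau (w$1) * hcau (w$2) * hcau (w$3)"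
    proof -
      have inj: "inj (\<lambda>i::3. axis i (1::real))"
        by (rule injI) (simp add: axis_eq_axis)
      have "(\<Prod>b\<in>Basis. hcau (w \<bullet> b)) = (\<Prod>i\<in>UNIV. hcau (w \<bullet> axis i 1))"
        unfolding Basis_cart3 prod.reindex[OF inj] by simp
      also have "\<dots> = (\<Prod>i\<in>UNIV. hcau (w $ i))" by (simp add: inner_axis)
      finally show ?thesis by (simp add: p3)
    qed
    finally show "ennreal (jb w powr (-6)) \<le> (\<Prod>b\<in>Basis. ennreal (hcau (w \<bullet> b)))"
      using jb_m6[of w] by (simp add: ennreal_leI)
  qed
  also have "\<dots> = (\<Prod>b\<in>(Basis::(real^3) set). (\<integral>\<^sup>+x. ennreal (hcau x) \<partial>lborel))"
    by (rule nn_integral_lborel_prod) auto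
  also have "\<dots> = (\<integral>\<^sup>+x. ennreal (hcau x) \<partial>lborel) ^ 3"
    by simp
  also have "\<dots> \<le> ennreal pi ^ 3"
    by (rule power_mono[OF hcau_int]) simp
  also have "\<dots> = ennreal (pi ^ 3)"
    by (simp add: ennreal_power)
  finally show ?thesis .
qed

lemma multi_zero: "multi P (\<lambda>_. 0) h = h"
  by (simp add: multi_def)

lemma mlen_zero: "mlen (\<lambda>_. 0) = 0"
  by (simp add: mlen_def)

lemma mlen_le: "a l \<le> mlen a"
  unfolding mlen_def by (rule member_le_sum) auto

lemma fin_idx10: "finite idx10"
proof -
  let ?A = "PiE (UNIV :: 3 set) (\<lambda>_. {..10::nat})"
  have fA: "finite ?A" by (intro finite_PiE) auto
  have "idx10 \<subseteq> ?A \<times> ?A \<times> ?A"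
  proof
    fix z assume "z \<in> idx10"
    then obtain a b s where z: "z = (a, b, s)" and m: "mlen a + mlen b + mlen s \<le> 10"
      by (auto simp: idx10_def)
    have "a l \<le> 10" "b l \<le> 10" "s l \<le> 10" for l
      using m mlen_le[of a l] mlen_le[of b l] mlen_le[of s l] by linarith+
    then show "z \<in> ?A \<times> ?A \<times> ?A" by (auto simp: z PiE_def extensional_def)
  qed
  then show ?thesis by (rule finite_subset[OF _ finite_cartesian_product[OF fA finite_cartesian_product[OF fA fA]]])
qed

lemma fam0_mlen: "k \<in> fam0 \<Longrightarrow> mlen k \<le> 3"
proof -
  assume k: "k \<in> fam0"
  have "mlen k = k 1 + k 2 + k 3" by (simp add: mlen_def sum_3)
  then show ?thesis using fam0_prop[OF k, of 1] fam0_prop[OF k, of 2] fam0_prop[OF k, of 3] by linarith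
qed

lemma usl_zero: "usl (\<lambda>_. 0) = []"
  by (simp add: usl_def)

lemma usl_up3: "k 1 = 0 \<Longrightarrow> k 2 = 0 \<Longrightarrow> k 3 = 0 \<Longrightarrow> usl (up 3 k) = exv 3 # usl k"
  by (simp add: usl_def up_def)
lemma usl_up2: "k 1 = 0 \<Longrightarrow> k 2 = 0 \<Longrightarrow> usl (up 2 k) = exv 2 # usl k"
  by (simp add: usl_def up_def)
lemma usl_up1: "k 1 = 0 \<Longrightarrow> usl (up 1 k) = exv 1 # usl k"
  by (simp add: usl_def up_def)

lemma powr_sq: "0 < (e::real) \<Longrightarrow> (e powr (3/4))\<^sup>2 = e powr (3/2)"
  by (simp add: power2_eq_square powr_add[symmetric])

locale bctx =
  fixes \<gamma> d0 \<delta> \<epsilon> Tb :: real and f :: phase_fun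
  assumes d0: "0 < d0" and dl: "0 < \<delta>" and eps: "0 < \<epsilon>" and Tb: "0 < Tb"
    and sm: "smooth_on ({..<Tb} \<times> UNIV) (\<lambda>(t, x, v). f t x v)"
    and fpos: "\<And>t x v. 0 \<le> t \<Longrightarrow> t < Tb \<Longrightarrow> 0 \<le> f t x v"
    and en: "\<And>T. 0 \<le> T \<Longrightarrow> T < Tb \<Longrightarrow> energy_sq \<delta> T (gfun d0 \<delta> f) \<le> ennreal ((\<epsilon> powr (3/4))\<^sup>2)"
begin

definition SS :: "pt set" where "SS = {..<Tb} \<times> UNIV"

lemma smF: "smooth_on SS (unc f)"
proof -
  have "unc f = (\<lambda>(t, x, v). f t x v)" by (simp add: unc_def)
  then show ?thesis using sm by (simp add: SS_def)
qed

lemma openSS: "open SS"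
  unfolding SS_def by (intro open_Times) auto

lemma inSS: "t < Tb \<Longrightarrow> (t, y, w) \<in> SS"
  by (simp add: SS_def)

definition Ew :: "real \<Rightarrow> real^3 \<Rightarrow> real" where
  "Ew t w = exp (dfun d0 \<delta> t * jb w)"

lemma Ew_ge1: "0 \<le> t \<Longrightarrow> 1 \<le> Ew t w"
proof -
  assume t: "0 \<le> t"
  have "0 \<le> dfun d0 \<delta> t" using d0 by (simp add: dfun_def)
  then have "0 \<le> dfun d0 \<delta> t * jb w" using jb_pos[of w] by simp
  then show ?thesis by (simp add: Ew_def)
qed

lemma Dg:
  assumes t: "t < Tb"
  shows "Dop k (\<lambda>_. 0) (\<lambda>_. 0) (gfun d0 \<delta> f) t y w = Ew t w * iter_pdir (usl k) (unc f) (t, y, w)"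
proof -
  define E where "E = (\<lambda>q::pt. case q of (t, x, v) \<Rightarrow> Ew t v)"
  have ug: "unc (gfun d0 \<delta> f) = (\<lambda>q. E q * unc f q)"
    by (auto simp: fun_eq_iff unc_def gfun_def E_def Ew_def)
  have "Dop k (\<lambda>_. 0) (\<lambda>_. 0) (gfun d0 \<delta> f) t y w = unc (multi dx k (gfun d0 \<delta> f)) (t, y, w)"
    by (simp add: Dop_def multi_zero unc_def)
  also have "\<dots> = iter_pdir (usl k) (\<lambda>q. E q * unc f q) (t, y, w)"
    by (simp add: unc_multi ug)
  also have "\<dots> = E (t, y, w) * iter_pdir (usl k) (unc f) (t, y, w)"
  proof (rule iter_pdir_cmult[OF smF openSS, of "{exv 1, exv 2, exv 3}"])
    show "{exv 1, exv 2, exv 3} \<subseteq> Basis" by (auto simp: exv_Basis)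
    show "set (usl k) \<subseteq> {exv 1, exv 2, exv 3}" by (rule usl_sub)
    show "(t, y, w) \<in> SS" using t by (rule inSS)
    fix u p s assume "u \<in> {exv 1, exv 2, exv 3}" "p \<in> SS"
    then show "p + s *\<^sub>R u \<in> SS \<and> E (p + s *\<^sub>R u) = E p"
      by (cases p) (auto simp: exv_def SS_def E_def)
  qed
  finally show ?thesis by (simp add: E_def)
qed

lemma en_term:
  assumes T: "0 \<le> T" "T < Tb" and m: "mlen a + mlen b + mlen s \<le> 10"
  shows "ennreal ((1 + T) powr (- real (mlen b) * (1 + \<delta>))) *
      ((SUP t\<in>{0..<T}. L2xv_sq (\<lambda>t x v. Wt a b s t x v * Dop a b s (gfun d0 \<delta> f) t x v) t)
       + (\<integral>\<^sup>+ t\<in>{0..<T}. L2xv_sq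
            (\<lambda>t x v. sqrt (jb v) * Wt a b s t x v * Dop a b s (gfun d0 \<delta> f) t x v) t \<partial>lborel))
    \<le> ennreal (\<epsilon> powr (3/2))"
proof -
  have mem: "(a, b, s) \<in> idx10" using m by (simp add: idx10_def)
  have "ennreal ((1 + T) powr (- real (mlen b) * (1 + \<delta>))) *
      ((SUP t\<in>{0..<T}. L2xv_sq (\<lambda>t x v. Wt a b s t x v * Dop a b s (gfun d0 \<delta> f) t x v) t)
       + (\<integral>\<^sup>+ t\<in>{0..<T}. L2xv_sq
            (\<lambda>t x v. sqrt (jb v) * Wt a b s t x v * Dop a b s (gfun d0 \<delta> f) t x v) t \<partial>lborel))
    \<le> energy_sq \<delta> T (gfun d0 \<delta> f)"
    unfolding energy_sq_def sum.remove[OF fin_idx10 mem] by simp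
  also have "\<dots> \<le> ennreal ((\<epsilon> powr (3/4))\<^sup>2)" using en T by auto
  finally show ?thesis using powr_sq[OF eps] by simp
qed

lemma L2_bound0:
  assumes t: "0 \<le> t" "t < T" "T < Tb" and m: "mlen a \<le> 10"
  shows "L2xv_sq (\<lambda>t x v. Wt a (\<lambda>_. 0) (\<lambda>_. 0) t x v * Dop a (\<lambda>_. 0) (\<lambda>_. 0) (gfun d0 \<delta> f) t x v) t
     \<le> ennreal (\<epsilon> powr (3/2))"
proof -
  let ?L = "\<lambda>t. L2xv_sq (\<lambda>t x v. Wt a (\<lambda>_. 0) (\<lambda>_. 0) t x v * Dop a (\<lambda>_. 0) (\<lambda>_. 0) (gfun d0 \<delta> f) t x v) t"
  have "?L t \<le> (SUP t\<in>{0..<T}. ?L t)" using t by (intro SUP_upper) auto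
  also have "\<dots> \<le> ennreal ((1 + T) powr (- real (mlen (\<lambda>_. 0::nat)) * (1 + \<delta>))) * ((SUP t\<in>{0..<T}. ?L t)
       + (\<integral>\<^sup>+ t\<in>{0..<T}. L2xv_sq
            (\<lambda>t x v. sqrt (jb v) * Wt a (\<lambda>_. 0) (\<lambda>_. 0) t x v * Dop a (\<lambda>_. 0) (\<lambda>_. 0) (gfun d0 \<delta> f) t x v) t \<partial>lborel))"
    using t by (simp add: mlen_zero)
  also have "\<dots> \<le> ennreal (\<epsilon> powr (3/2))"
    by (rule en_term) (use t m in \<open>auto simp: mlen_zero\<close>)
  finally show ?thesis .
qed

end

definition nest :: "(real \<Rightarrow> real \<Rightarrow> real \<Rightarrow> ennreal) \<Rightarrow> ennreal" where
 "nest \<Psi> = (\<integral>\<^sup>+c. ennreal (indicator {0..1} c) * (\<integral>\<^sup>+b. ennreal (indicator {0..1} b) *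
      (\<integral>\<^sup>+a. ennreal (indicator {0..1} a) * \<Psi> c b a \<partial>lborel) \<partial>lborel) \<partial>lborel)"

lemma ind_mono: "(x \<in> S \<Longrightarrow> X \<le> Y) \<Longrightarrow> ennreal (indicator S x) * X \<le> ennreal (indicator S x) * Y"
  by (cases "x \<in> S") auto

lemma nest_mono:
  assumes "\<And>a b c. a \<in> {0..1} \<Longrightarrow> b \<in> {0..1} \<Longrightarrow> c \<in> {0..1} \<Longrightarrow> \<Psi> c b a \<le> \<Psi>' c b a"
  shows "nest \<Psi> \<le> nest \<Psi>'"
  unfolding nest_def
  by (intro nn_integral_mono ind_mono assms)

lemma nest_cmult:
  assumes "k < top"
  shows "nest (\<lambda>c b a. k * \<Psi> c b a) = k * nest \<Psi>"
proof -
  have "nest (\<lambda>c b a. k * \<Psi> c b a) = (\<integral>\<^sup>+c. ennreal (indicator {0..1} c) * (\<integral>\<^sup>+b. ennreal (indicator {0..1} b) *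
      (k * (\<integral>\<^sup>+a. ennreal (indicator {0..1} a) * \<Psi> c b a \<partial>lborel)) \<partial>lborel) \<partial>lborel)"
    unfolding nest_def
    by (simp add: mult.left_commute[of _ k] nn_integral_cmult_gen[OF assms])
  also have "\<dots> = (\<integral>\<^sup>+c. ennreal (indicator {0..1} c) * (k * (\<integral>\<^sup>+b. ennreal (indicator {0..1} b) *
      (\<integral>\<^sup>+a. ennreal (indicator {0..1} a) * \<Psi> c b a \<partial>lborel) \<partial>lborel)) \<partial>lborel)"
    by (simp add: mult.left_commute[of _ k] nn_integral_cmult_gen[OF assms])
  also have "\<dots> = k * nest \<Psi>"
    unfolding nest_def by (simp add: mult.left_commute[of _ k] nn_integral_cmult_gen[OF assms])
  finally show ?thesis .
qed

lemma amgm5: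
  fixes lam A B :: real
  assumes "0 < lam"
  shows "5 * A * B \<le> (5 * lam / 2) * A\<^sup>2 + (5 / (2 * lam)) * B\<^sup>2"
proof -
  have "0 \<le> (5 / (2 * lam)) * (lam * A - B)\<^sup>2" using assms by simp
  also have "(5 / (2 * lam)) * (lam * A - B)\<^sup>2 = (5 * lam / 2) * A\<^sup>2 + (5 / (2 * lam)) * B\<^sup>2 - 5 * A * B"
    using assms by (simp add: power2_eq_square field_simps)
  finally show ?thesis by simp
qed

lemma nu0: "nu k (\<lambda>_. 0) (\<lambda>_. 0) = 20 - 3/2 * real (mlen k)"
  by (simp add: nu_def mlen_zero)
lemma omega0: "omega k (\<lambda>_. 0) (\<lambda>_. 0) = 20 - 1/2 * real (mlen k)"
  by (simp add: omega_def mlen_zero)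

lemma pt_ineq:
  fixes lam E U t :: real and x p w :: "real^3"
  assumes lam: "0 < lam" and E: "1 \<le> E" and k: "mlen k \<le> 3" and d: "norm (x - p) \<le> 3"
  shows "(jb w)\<^sup>2 * jb (x - (t + 1) *\<^sub>R w) * \<bar>U\<bar> \<le>
     (5 * lam / 2) * jb w powr (-6) + (5 / (2 * lam)) * (Wt k (\<lambda>_. 0) (\<lambda>_. 0) t p w * (E * U))\<^sup>2"
proof -
  let ?zp = "p - (t + 1) *\<^sub>R w"
  have jw: "0 < jb w" and jz: "0 < jb ?zp" by (rule jb_pos)+
  have pe: "jb (x - (t + 1) *\<^sub>R w) \<le> 5 * jb ?zp"
    by (rule peetre) (simp add: d)
  define A where "A = jb w powr (-3)"
  define B where "B = jb w powr 5 * jb ?zp * (E * \<bar>U\<bar>)"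
  have AB: "A * B = (jb w)\<^sup>2 * jb ?zp * (E * \<bar>U\<bar>)"
  proof -
    have "jb w powr (-3) * jb w powr 5 = jb w powr (-3 + 5)"
      by (simp only: powr_add)
    also have "\<dots> = jb w powr 2" by simp
    also have "\<dots> = (jb w)\<^sup>2" using jw by (simp add: powr_numeral)
    finally have e: "jb w powr (-3) * jb w powr 5 = (jb w)\<^sup>2" .
    show ?thesis unfolding A_def B_def e[symmetric] by (simp only: mult_ac)
  qed
  have A2: "A\<^sup>2 = jb w powr (-6)"
    using jw by (simp add: A_def power2_eq_square powr_add[symmetric])
  have Wge: "jb w powr 5 * jb ?zp \<le> Wt k (\<lambda>_. 0) (\<lambda>_. 0) t p w"
  proof -
    have "jb w powr 5 \<le> jb w powr nu k (\<lambda>_. 0) (\<lambda>_. 0)"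
      using k jb_ge1[of w] by (intro powr_mono) (auto simp: nu0)
    moreover have "jb ?zp \<le> jb ?zp powr omega k (\<lambda>_. 0) (\<lambda>_. 0)"
      using k jb_ge1[of ?zp] powr_mono[of 1 "omega k (\<lambda>_. 0) (\<lambda>_. 0)" "jb ?zp"] by (auto simp: omega0)
    ultimately show ?thesis unfolding Wt_def using jw jz
      by (intro mult_mono) auto
  qed
  have B2: "B\<^sup>2 \<le> (Wt k (\<lambda>_. 0) (\<lambda>_. 0) t p w * (E * U))\<^sup>2"
  proof -
    have "0 \<le> B" using jw jz E by (simp add: B_def)
    moreover have "B \<le> Wt k (\<lambda>_. 0) (\<lambda>_. 0) t p w * \<bar>E * U\<bar>"
      unfolding B_def using Wge E by (simp add: abs_mult mult_right_mono)
    ultimately have "B\<^sup>2 \<le> (Wt k (\<lambda>_. 0) (\<lambda>_. 0) t p w * \<bar>E * U\<bar>)\<^sup>2"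
      by (intro power_mono) auto
    then show ?thesis by (simp add: power_mult_distrib)
  qed
  have "(jb w)\<^sup>2 * jb (x - (t + 1) *\<^sub>R w) * \<bar>U\<bar> \<le> (jb w)\<^sup>2 * (5 * jb ?zp) * (E * \<bar>U\<bar>)"
  proof -
    have "\<bar>U\<bar> \<le> E * \<bar>U\<bar>" using E mult_right_mono[of 1 E "\<bar>U\<bar>"] by simp
    then show ?thesis using pe jw jz jb_pos[of "x - (t + 1) *\<^sub>R w"] by (intro mult_mono) auto
  qed
  also have "\<dots> = 5 * A * B" using AB by (simp add: mult_ac)
  also have "\<dots> \<le> (5 * lam / 2) * A\<^sup>2 + (5 / (2 * lam)) * B\<^sup>2" by (rule amgm5[OF lam])
  also have "\<dots> \<le> (5 * lam / 2) * jb w powr (-6) + (5 / (2 * lam)) * (Wt k (\<lambda>_. 0) (\<lambda>_. 0) t p w * (E * U))\<^sup>2"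
    using B2 lam A2 by (intro add_mono mult_left_mono) auto
  finally show ?thesis .
qed

lemma cont_jb: "continuous_on UNIV jb"
  unfolding jb_def[abs_def] by (intro continuous_intros)

lemma cont_jb_comp: "continuous_on S g \<Longrightarrow> continuous_on S (\<lambda>x. jb (g x))"
  using continuous_on_compose2[OF cont_jb] by auto

lemma jb_neq0[simp]: "jb z \<noteq> 0"
  using jb_pos[of z] by simp

lemma cont_jb_powr: "continuous_on S g \<Longrightarrow> continuous_on S (\<lambda>x. jb (g x) powr e)"
  by (intro continuous_on_powr' cont_jb_comp continuous_on_const) (auto intro: less_imp_le[OF jb_pos])

lemma norm_cube: fixes x :: "real^3" shows "a \<in> {0..1} \<Longrightarrow> b \<in> {0..1} \<Longrightarrow> c \<in> {0..1} \<Longrightarrow>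
   norm (x - (x + c *\<^sub>R axis (3::3) 1 + b *\<^sub>R axis (2::3) 1 + a *\<^sub>R axis (1::3) (1::real))) \<le> 3"
proof -
  have e: "x - (x + c *\<^sub>R axis (3::3) 1 + b *\<^sub>R axis (2::3) 1 + a *\<^sub>R axis (1::3) (1::real)) =
     - (c *\<^sub>R axis (3::3) 1 + b *\<^sub>R axis (2::3) 1 + a *\<^sub>R axis (1::3) (1::real))" by (simp add: algebra_simps)
  assume abc: "a \<in> {0..1}" "b \<in> {0..1}" "c \<in> {0..1}"
  have "norm (x - (x + c *\<^sub>R axis (3::3) 1 + b *\<^sub>R axis (2::3) 1 + a *\<^sub>R axis (1::3) (1::real))) =
     norm (c *\<^sub>R axis (3::3) 1 + b *\<^sub>R axis (2::3) 1 + a *\<^sub>R axis (1::3) (1::real))"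
    unfolding e by (rule norm_minus_cancel)
  also have "\<dots> \<le> norm (c *\<^sub>R axis (3::3) (1::real)) + norm (b *\<^sub>R axis (2::3) (1::real)) + norm (a *\<^sub>R axis (1::3) (1::real))"
    using norm_triangle_ineq[of "c *\<^sub>R axis (3::3) (1::real) + b *\<^sub>R axis (2::3) 1" "a *\<^sub>R axis (1::3) 1"]
      norm_triangle_ineq[of "c *\<^sub>R axis (3::3) (1::real)" "b *\<^sub>R axis (2::3) 1"] by linarith
  also have "\<dots> = \<bar>c\<bar> + \<bar>b\<bar> + \<bar>a\<bar>" by simp
  also have "\<dots> \<le> 3" using abc by auto
  finally show ?thesis .
qed

context bctx begin

definition Uf :: "real \<Rightarrow> real^3 \<Rightarrow> (3 \<Rightarrow> nat) \<Rightarrow> real^3 \<Rightarrow> real" where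
  "Uf t w k y = iter_pdir (usl k) (unc f) (t, y, w)"

lemma Uf_zero: "Uf t w (\<lambda>_. 0) y = f t y w"
  by (simp add: Uf_def usl_zero iter_pdir_def unc_def)

lemma Uf_cont_joint:
  assumes t: "t < Tb"
  shows "continuous_on UNIV (\<lambda>(y, w). Uf t w k y)"
proof -
  have H: "continuous_on SS (iter_pdir (usl k) (unc f))"
    by (rule smooth_cont[OF smF usl_Basis])
  have phi: "continuous_on UNIV (\<lambda>(y::real^3, w::real^3). (t, y, w))"
    by (auto intro!: continuous_intros simp: split_beta)
  have "continuous_on UNIV (\<lambda>q. iter_pdir (usl k) (unc f) ((\<lambda>(y::real^3, w::real^3). (t, y, w)) q))"
    by (rule continuous_on_compose2[OF H phi]) (auto simp: SS_def t)
  then show ?thesis by (simp add: Uf_def split_beta)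
qed

lemma Uf_cont:
  assumes t: "t < Tb"
  shows "continuous_on UNIV (Uf t w k)"
proof -
  have "continuous_on UNIV (\<lambda>y. (\<lambda>(y, w). Uf t w k y) (y, w))"
    by (rule continuous_on_compose2[OF Uf_cont_joint[OF t]]) (auto intro!: continuous_intros)
  then show ?thesis by simp
qed

lemma Uf_deriv:
  assumes t: "t < Tb" and u: "usl (up l k) = exv l # usl k"
  shows "((\<lambda>r. Uf t w k (y + r *\<^sub>R axis l 1)) has_real_derivative Uf t w (up l k) (y + s *\<^sub>R axis l 1)) (at s)"
proof -
  let ?H = "iter_pdir (usl k) (unc f)"
  have "?H differentiable (at ((t, y, w) + s *\<^sub>R exv l))"
    by (rule smooth_diff_at[OF smF openSS _ usl_Basis]) (simp add: exv_line inSS t)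
  then have "((\<lambda>r. ?H ((t, y, w) + r *\<^sub>R exv l)) has_real_derivative pdir ?H (exv l) ((t, y, w) + s *\<^sub>R exv l)) (at s)"
    by (rule line_has_deriv)
  then show ?thesis
    by (simp add: exv_line Uf_def u iter_pdir_Cons)
qed

lemma sob_f:
  assumes t: "t < Tb"
  shows "ennreal \<bar>f t x w\<bar> \<le>
    nest (\<lambda>c b a. ennreal (\<Sum>k\<in>fam0. \<bar>Uf t w k (x + c *\<^sub>R axis 3 1 + b *\<^sub>R axis 2 1 + a *\<^sub>R axis 1 1)\<bar>))"
proof -
  have "ennreal \<bar>Uf t w (\<lambda>_. 0) x\<bar> \<le>
    (\<integral>\<^sup>+c. ennreal (indicator {0..1} c) * (\<integral>\<^sup>+b. ennreal (indicator {0..1} b) *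
      (\<integral>\<^sup>+a. ennreal (indicator {0..1} a *
         (\<Sum>k\<in>fam0. \<bar>Uf t w k (x + c *\<^sub>R axis 3 1 + b *\<^sub>R axis 2 1 + a *\<^sub>R axis 1 1)\<bar>)) \<partial>lborel) \<partial>lborel) \<partial>lborel)"
  proof (rule sob3d)
    show "continuous_on UNIV (Uf t w k)" for k by (rule Uf_cont[OF t])
    show "((\<lambda>r. Uf t w k (y + r *\<^sub>R axis 3 1)) has_real_derivative Uf t w (up 3 k) (y + s *\<^sub>R axis 3 1)) (at s)"
      if "k 1 = 0" "k 2 = 0" "k 3 = 0" for k y s
      using that by (intro Uf_deriv[OF t] usl_up3)
    show "((\<lambda>r. Uf t w k (y + r *\<^sub>R axis 2 1)) has_real_derivative Uf t w (up 2 k) (y + s *\<^sub>R axis 2 1)) (at s)"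
      if "k 1 = 0" "k 2 = 0" for k y s
      using that by (intro Uf_deriv[OF t] usl_up2)
    show "((\<lambda>r. Uf t w k (y + r *\<^sub>R axis 1 1)) has_real_derivative Uf t w (up 1 k) (y + s *\<^sub>R axis 1 1)) (at s)"
      if "k 1 = 0" for k y s
      using that by (intro Uf_deriv[OF t] usl_up1)
  qed
  then show ?thesis by (simp add: Uf_zero nest_def ennreal_ind_mult)
qed

end

context bctx begin

definition Bf :: "real \<Rightarrow> real \<Rightarrow> real^3 \<Rightarrow> real^3 \<Rightarrow> real" where
 "Bf t lam w y = 5 / (2 * lam) * (\<Sum>k\<in>fam0. (Wt k (\<lambda>_. 0) (\<lambda>_. 0) t y w * (Ew t w * Uf t w k y))\<^sup>2)"

lemma Bf_nonneg: "0 < lam \<Longrightarrow> 0 \<le> Bf t lam w y"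
  unfolding Bf_def by (intro mult_nonneg_nonneg sum_nonneg) auto

lemma Bf_cont:
  assumes t: "t < Tb"
  shows "continuous_on UNIV (\<lambda>p. Bf t lam (fst p) (snd p))"
proof -
  have U: "continuous_on UNIV (\<lambda>p::(real^3) \<times> (real^3). Uf t (fst p) k (snd p))" for k
  proof -
    have "continuous_on UNIV (\<lambda>p::(real^3) \<times> (real^3). (\<lambda>(y, w). Uf t w k y) (snd p, fst p))"
      by (rule continuous_on_compose2[OF Uf_cont_joint[OF t]]) (auto intro!: continuous_intros)
    then show ?thesis by simp
  qed
  have W: "continuous_on UNIV (\<lambda>p::(real^3) \<times> (real^3). Wt k (\<lambda>_. 0) (\<lambda>_. 0) t (snd p) (fst p))" for k
    unfolding Wt_def by (intro continuous_intros cont_jb_powr)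
  have E: "continuous_on UNIV (\<lambda>p::(real^3) \<times> (real^3). Ew t (fst p))"
    unfolding Ew_def by (intro continuous_intros cont_jb_comp)
  show ?thesis
    unfolding Bf_def by (intro continuous_intros U W E)
qed

lemma Bf_meas_pair:
  assumes t: "t < Tb"
  shows "(\<lambda>(w, y). ennreal (Bf t lam w y)) \<in> borel_measurable (lborel \<Otimes>\<^sub>M lborel)"
proof -
  have "(\<lambda>p. Bf t lam (fst p) (snd p)) \<in> borel_measurable borel"
    by (rule borel_measurable_continuous_onI[OF Bf_cont[OF t]])
  then have "(\<lambda>p. ennreal (Bf t lam (fst p) (snd p))) \<in> borel_measurable borel"
    by measurable
  then show ?thesis by (simp add: lborel_prod split_beta)
qed

lemma Bf_meas_y:
  assumes t: "t < Tb"
  shows "(\<lambda>y. ennreal (Bf t lam w y)) \<in> borel_measurable borel"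
proof -
  have "(\<lambda>y. Bf t lam (fst (w, y)) (snd (w, y))) \<in> borel_measurable borel"
    by (rule borel_measurable_continuous_onI, rule continuous_on_compose2[OF Bf_cont[OF t]])
       (auto intro!: continuous_intros)
  then have "Bf t lam w \<in> borel_measurable borel" by simp
  then show ?thesis by (rule measurable_compose[OF _ measurable_ennreal])
qed

lemma pw_bound:
  assumes t: "0 \<le> t" "t < Tb" and lam: "0 < lam"
  shows "ennreal ((jb w)\<^sup>2 * jb (x - (t + 1) *\<^sub>R w) * f t x w) \<le>
     ennreal (20 * lam * jb w powr (-6)) + (\<integral>\<^sup>+y. ennreal (Bf t lam w y) \<partial>lborel)"
proof -
  define c0 where "c0 = (jb w)\<^sup>2 * jb (x - (t + 1) *\<^sub>R w)"
  define A6 where "A6 = 20 * lam * jb w powr (-6)"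
  define P where "P c b a = x + c *\<^sub>R axis 3 1 + b *\<^sub>R axis 2 1 + a *\<^sub>R axis 1 (1::real)" for c b a
  have c0: "0 \<le> c0" using jb_pos by (simp add: c0_def less_imp_le)
  have A6: "0 \<le> A6" using lam by (simp add: A6_def)
  have fnn: "0 \<le> f t x w" using fpos t by auto
  have real_ineq: "c0 * (\<Sum>k\<in>fam0. \<bar>Uf t w k (P c b a)\<bar>) \<le> A6 + Bf t lam w (P c b a)"
    if abc: "a \<in> {0..1}" "b \<in> {0..1}" "c \<in> {0..1}" for a b c
  proof -
    have nc: "norm (x - P c b a) \<le> 3" unfolding P_def by (rule norm_cube[OF abc])
    have "c0 * (\<Sum>k\<in>fam0. \<bar>Uf t w k (P c b a)\<bar>) = (\<Sum>k\<in>fam0. c0 * \<bar>Uf t w k (P c b a)\<bar>)"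
      by (simp add: sum_distrib_left)
    also have "\<dots> \<le> (\<Sum>k\<in>fam0. (5 * lam / 2) * jb w powr (-6) +
         (5 / (2 * lam)) * (Wt k (\<lambda>_. 0) (\<lambda>_. 0) t (P c b a) w * (Ew t w * Uf t w k (P c b a)))\<^sup>2)"
      unfolding c0_def
      by (intro sum_mono pt_ineq[OF lam Ew_ge1[OF t(1)] fam0_mlen nc])
    also have "\<dots> = real (card fam0) * ((5 * lam / 2) * jb w powr (-6)) + Bf t lam w (P c b a)"
      by (simp add: sum.distrib Bf_def sum_distrib_left)
    also have "\<dots> \<le> A6 + Bf t lam w (P c b a)"
    proof -
      have "real (card fam0) * ((5 * lam / 2) * jb w powr (-6)) \<le> 8 * ((5 * lam / 2) * jb w powr (-6))"
        using card_fam0 lam by (intro mult_right_mono) auto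
      then show ?thesis by (simp add: A6_def)
    qed
    finally show ?thesis .
  qed
  have "ennreal ((jb w)\<^sup>2 * jb (x - (t + 1) *\<^sub>R w) * f t x w) = ennreal c0 * ennreal \<bar>f t x w\<bar>"
    using c0 fnn by (simp add: c0_def ennreal_mult)
  also have "\<dots> \<le> ennreal c0 * nest (\<lambda>c b a. ennreal (\<Sum>k\<in>fam0. \<bar>Uf t w k (P c b a)\<bar>))"
    using sob_f[OF t(2), of x w] by (intro mult_left_mono) (auto simp: P_def)
  also have "\<dots> = nest (\<lambda>c b a. ennreal c0 * ennreal (\<Sum>k\<in>fam0. \<bar>Uf t w k (P c b a)\<bar>))"
    by (rule nest_cmult[symmetric]) simp
  also have "\<dots> \<le> nest (\<lambda>c b a. ennreal A6 + ennreal (Bf t lam w (P c b a)))"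
  proof (rule nest_mono)
    fix a b c :: real assume abc: "a \<in> {0..1}" "b \<in> {0..1}" "c \<in> {0..1}"
    have "ennreal c0 * ennreal (\<Sum>k\<in>fam0. \<bar>Uf t w k (P c b a)\<bar>) = ennreal (c0 * (\<Sum>k\<in>fam0. \<bar>Uf t w k (P c b a)\<bar>))"
      using c0 by (simp add: ennreal_mult)
    also have "\<dots> \<le> ennreal (A6 + Bf t lam w (P c b a))"
      by (rule ennreal_leI[OF real_ineq[OF abc]])
    also have "\<dots> = ennreal A6 + ennreal (Bf t lam w (P c b a))"
      using A6 Bf_nonneg[OF lam] by (simp add: ennreal_plus)
    finally show "ennreal c0 * ennreal (\<Sum>k\<in>fam0. \<bar>Uf t w k (P c b a)\<bar>) \<le> ennreal A6 + ennreal (Bf t lam w (P c b a))" .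
  qed
  also have "\<dots> = (\<integral>\<^sup>+y. ennreal (indicator (Qc x) y) * (ennreal A6 + ennreal (Bf t lam w y)) \<partial>lborel)"
    unfolding nest_def P_def
    by (rule cube3) (use Bf_meas_y[OF t(2)] in measurable)
  also have "\<dots> = (\<integral>\<^sup>+y. ennreal (indicator (Qc x) y) * ennreal A6 \<partial>lborel) +
      (\<integral>\<^sup>+y. ennreal (indicator (Qc x) y) * ennreal (Bf t lam w y) \<partial>lborel)"
    by (simp add: distrib_left, rule nn_integral_add) (use Bf_meas_y[OF t(2)] in measurable)
  also have "\<dots> \<le> ennreal A6 + (\<integral>\<^sup>+y. ennreal (Bf t lam w y) \<partial>lborel)"
  proof (rule add_mono)
    show "(\<integral>\<^sup>+y. ennreal (indicator (Qc x) y) * ennreal A6 \<partial>lborel) \<le> ennreal A6"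
      by (simp add: emeasure_Qc)
    show "(\<integral>\<^sup>+y. ennreal (indicator (Qc x) y) * ennreal (Bf t lam w y) \<partial>lborel) \<le> (\<integral>\<^sup>+y. ennreal (Bf t lam w y) \<partial>lborel)"
      by (intro nn_integral_mono) (auto simp: indicator_def)
  qed
  finally show ?thesis by (simp add: A6_def)
qed

end

lemma cont_pair_meas:
  fixes h :: "'a::euclidean_space \<Rightarrow> 'b::euclidean_space \<Rightarrow> real"
  assumes c: "continuous_on UNIV (\<lambda>p. h (fst p) (snd p))"
  shows "(\<lambda>(a, b). ennreal (h a b)) \<in> borel_measurable (lborel \<Otimes>\<^sub>M lborel)"
    and "\<And>a. (\<lambda>b. ennreal (h a b)) \<in> borel_measurable borel"
    and "\<And>b. (\<lambda>a. ennreal (h a b)) \<in> borel_measurable borel"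
proof -
  have m: "(\<lambda>p. h (fst p) (snd p)) \<in> borel_measurable borel"
    by (rule borel_measurable_continuous_onI[OF c])
  then have "(\<lambda>p. ennreal (h (fst p) (snd p))) \<in> borel_measurable borel"
    by (rule measurable_compose[OF _ measurable_ennreal])
  then show "(\<lambda>(a, b). ennreal (h a b)) \<in> borel_measurable (lborel \<Otimes>\<^sub>M lborel)"
    by (simp add: lborel_prod split_beta)
  fix a b
  have "(\<lambda>b. h (fst (a, b)) (snd (a, b))) \<in> borel_measurable borel"
    by (rule borel_measurable_continuous_onI, rule continuous_on_compose2[OF c]) (auto intro!: continuous_intros)
  then have "h a \<in> borel_measurable borel" by simp
  then show "(\<lambda>b. ennreal (h a b)) \<in> borel_measurable borel"
    by (rule measurable_compose[OF _ measurable_ennreal])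
  have "(\<lambda>a. h (fst (a, b)) (snd (a, b))) \<in> borel_measurable borel"
    by (rule borel_measurable_continuous_onI, rule continuous_on_compose2[OF c]) (auto intro!: continuous_intros)
  then have "(\<lambda>a. h a b) \<in> borel_measurable borel" by simp
  then show "(\<lambda>a. ennreal (h a b)) \<in> borel_measurable borel"
    by (rule measurable_compose[OF _ measurable_ennreal])
qed

context bctx begin

definition Gk :: "real \<Rightarrow> (3 \<Rightarrow> nat) \<Rightarrow> real^3 \<Rightarrow> real^3 \<Rightarrow> real" where
  "Gk t k y w = (Wt k (\<lambda>_. 0) (\<lambda>_. 0) t y w * (Ew t w * Uf t w k y))\<^sup>2"

lemma Gk_cont:
  assumes t: "t < Tb"
  shows "continuous_on UNIV (\<lambda>p. Gk t k (fst p) (snd p))"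
proof -
  have U: "continuous_on UNIV (\<lambda>p::(real^3) \<times> (real^3). Uf t (snd p) k (fst p))"
  proof -
    have "continuous_on UNIV (\<lambda>p::(real^3) \<times> (real^3). (\<lambda>(y, w). Uf t w k y) (fst p, snd p))"
      by (rule continuous_on_compose2[OF Uf_cont_joint[OF t]]) (auto intro!: continuous_intros)
    then show ?thesis by (simp add: split_beta)
  qed
  have W: "continuous_on UNIV (\<lambda>p::(real^3) \<times> (real^3). Wt k (\<lambda>_. 0) (\<lambda>_. 0) t (fst p) (snd p))"
    unfolding Wt_def by (intro continuous_intros cont_jb_powr)
  have E: "continuous_on UNIV (\<lambda>p::(real^3) \<times> (real^3). Ew t (snd p))"
    unfolding Ew_def by (intro continuous_intros cont_jb_comp)
  show ?thesis
    unfolding Gk_def by (intro continuous_intros U W E)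
qed

lemma Gk_L2:
  assumes t: "0 \<le> t" "t < T" "T < Tb" and k: "k \<in> fam0"
  shows "(\<integral>\<^sup>+y. \<integral>\<^sup>+w. ennreal (Gk t k y w) \<partial>lborel \<partial>lborel) \<le> ennreal (\<epsilon> powr (3/2))"
proof -
  have "(\<integral>\<^sup>+y. \<integral>\<^sup>+w. ennreal (Gk t k y w) \<partial>lborel \<partial>lborel) =
     L2xv_sq (\<lambda>t x v. Wt k (\<lambda>_. 0) (\<lambda>_. 0) t x v * Dop k (\<lambda>_. 0) (\<lambda>_. 0) (gfun d0 \<delta> f) t x v) t"
    unfolding L2xv_sq_def Gk_def using t by (simp add: Dg Uf_def)
  also have "\<dots> \<le> ennreal (\<epsilon> powr (3/2))"
    by (rule L2_bound0[OF t]) (use fam0_mlen[OF k] in simp)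
  finally show ?thesis .
qed

lemma Bf_split:
  assumes t: "t < Tb" and lam: "0 < lam"
  shows "(\<integral>\<^sup>+w. ennreal (Bf t lam w y) \<partial>lborel) = ennreal (5 / (2 * lam)) * (\<Sum>k\<in>fam0. \<integral>\<^sup>+w. ennreal (Gk t k y w) \<partial>lborel)"
proof -
  have "(\<integral>\<^sup>+w. ennreal (Bf t lam w y) \<partial>lborel) = (\<integral>\<^sup>+w. ennreal (5 / (2 * lam)) * (\<Sum>k\<in>fam0. ennreal (Gk t k y w)) \<partial>lborel)"
  proof (rule nn_integral_cong)
    fix w
    have "ennreal (Bf t lam w y) = ennreal (5 / (2 * lam)) * ennreal (\<Sum>k\<in>fam0. Gk t k y w)"
      unfolding Bf_def Gk_def by (rule ennreal_mult) (use lam in \<open>auto intro: sum_nonneg\<close>)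
    also have "ennreal (\<Sum>k\<in>fam0. Gk t k y w) = (\<Sum>k\<in>fam0. ennreal (Gk t k y w))"
      by (rule sum_ennreal[symmetric]) (simp add: Gk_def)
    finally show "ennreal (Bf t lam w y) = ennreal (5 / (2 * lam)) * (\<Sum>k\<in>fam0. ennreal (Gk t k y w))" .
  qed
  also have "\<dots> = ennreal (5 / (2 * lam)) * (\<integral>\<^sup>+w. (\<Sum>k\<in>fam0. ennreal (Gk t k y w)) \<partial>lborel)"
    by (rule nn_integral_cmult_gen) simp
  also have "(\<integral>\<^sup>+w. (\<Sum>k\<in>fam0. ennreal (Gk t k y w)) \<partial>lborel) = (\<Sum>k\<in>fam0. \<integral>\<^sup>+w. ennreal (Gk t k y w) \<partial>lborel)"
    by (rule nn_integral_sum) (simp add: cont_pair_meas(2)[OF Gk_cont[OF t]])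
  finally show ?thesis .
qed

lemma Sbound:
  assumes t: "0 \<le> t" "t < T" "T < Tb"
  shows "(\<integral>\<^sup>+w. ennreal ((jb w)\<^sup>2 * jb (x - (t + 1) *\<^sub>R w) * f t x w) \<partial>lborel)
     \<le> ennreal (\<epsilon> powr (3/4) * (20 * pi ^ 3 + 20))"
proof -
  define lam where "lam = \<epsilon> powr (3/4)"
  have lam: "0 < lam" using eps by (simp add: lam_def)
  have tb: "t < Tb" using t by simp
  have lam2: "\<epsilon> powr (3/2) = lam\<^sup>2" using powr_sq[OF eps] by (simp add: lam_def)
  have "(\<integral>\<^sup>+w. ennreal ((jb w)\<^sup>2 * jb (x - (t + 1) *\<^sub>R w) * f t x w) \<partial>lborel) \<le>
     (\<integral>\<^sup>+w. ennreal (20 * lam * jb w powr (-6)) + (\<integral>\<^sup>+y. ennreal (Bf t lam w y) \<partial>lborel) \<partial>lborel)"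
    by (intro nn_integral_mono pw_bound t(1) tb lam)
  also have "\<dots> = (\<integral>\<^sup>+w. ennreal (20 * lam * jb w powr (-6)) \<partial>lborel) + (\<integral>\<^sup>+w. \<integral>\<^sup>+y. ennreal (Bf t lam w y) \<partial>lborel \<partial>lborel)"
  proof (rule nn_integral_add)
    have "continuous_on UNIV (\<lambda>w::real^3. 20 * lam * jb w powr (-6))"
      by (intro continuous_intros cont_jb_powr)
    then have "(\<lambda>w::real^3. 20 * lam * jb w powr (-6)) \<in> borel_measurable borel"
      by (rule borel_measurable_continuous_onI)
    then show "(\<lambda>w::real^3. ennreal (20 * lam * jb w powr (-6))) \<in> borel_measurable lborel"
      by (simp add: measurable_compose[OF _ measurable_ennreal])
    show "(\<lambda>w. \<integral>\<^sup>+y. ennreal (Bf t lam w y) \<partial>lborel) \<in> borel_measurable lborel"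
      by (rule lborel.borel_measurable_nn_integral) (use Bf_meas_pair[OF tb] in simp)
  qed
  also have "(\<integral>\<^sup>+w. ennreal (20 * lam * jb w powr (-6)) \<partial>lborel) \<le> ennreal (20 * lam * pi ^ 3)"
  proof -
    have "(\<integral>\<^sup>+w. ennreal (20 * lam * jb w powr (-6)) \<partial>lborel) = (\<integral>\<^sup>+(w::real^3). ennreal (20 * lam) * ennreal (jb w powr (-6)) \<partial>lborel)"
      by (rule nn_integral_cong, rule ennreal_mult) (use lam in auto)
    also have "\<dots> = ennreal (20 * lam) * (\<integral>\<^sup>+(w::real^3). ennreal (jb w powr (-6)) \<partial>lborel)"
      by (rule nn_integral_cmult_gen) simp
    also have "\<dots> \<le> ennreal (20 * lam) * ennreal (pi ^ 3)"
      by (intro mult_left_mono I6_fin) simp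
    finally show ?thesis using lam by (simp add: ennreal_mult)
  qed
  also have "(\<integral>\<^sup>+w. \<integral>\<^sup>+y. ennreal (Bf t lam w y) \<partial>lborel \<partial>lborel) \<le> ennreal (20 * lam)"
  proof -
    have "(\<integral>\<^sup>+w. \<integral>\<^sup>+y. ennreal (Bf t lam w y) \<partial>lborel \<partial>lborel) = (\<integral>\<^sup>+y. \<integral>\<^sup>+w. ennreal (Bf t lam w y) \<partial>lborel \<partial>lborel)"
      by (rule lborel_pair.Fubini'[symmetric]) (rule Bf_meas_pair[OF tb])
    also have "\<dots> = (\<integral>\<^sup>+y. ennreal (5 / (2 * lam)) * (\<Sum>k\<in>fam0. \<integral>\<^sup>+w. ennreal (Gk t k y w) \<partial>lborel) \<partial>lborel)"
      by (simp add: Bf_split[OF tb lam])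
    also have "\<dots> = ennreal (5 / (2 * lam)) * (\<Sum>k\<in>fam0. \<integral>\<^sup>+y. \<integral>\<^sup>+w. ennreal (Gk t k y w) \<partial>lborel \<partial>lborel)"
    proof -
      have "(\<integral>\<^sup>+y. ennreal (5 / (2 * lam)) * (\<Sum>k\<in>fam0. \<integral>\<^sup>+w. ennreal (Gk t k y w) \<partial>lborel) \<partial>lborel)
         = ennreal (5 / (2 * lam)) * (\<integral>\<^sup>+y. (\<Sum>k\<in>fam0. \<integral>\<^sup>+w. ennreal (Gk t k y w) \<partial>lborel) \<partial>lborel)"
        by (rule nn_integral_cmult_gen) simp
      also have "(\<integral>\<^sup>+y. (\<Sum>k\<in>fam0. \<integral>\<^sup>+w. ennreal (Gk t k y w) \<partial>lborel) \<partial>lborel)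
         = (\<Sum>k\<in>fam0. \<integral>\<^sup>+y. \<integral>\<^sup>+w. ennreal (Gk t k y w) \<partial>lborel \<partial>lborel)"
      proof (rule nn_integral_sum)
        fix k
        show "(\<lambda>y. \<integral>\<^sup>+w. ennreal (Gk t k y w) \<partial>lborel) \<in> borel_measurable lborel"
          by (rule lborel.borel_measurable_nn_integral) (use cont_pair_meas(1)[OF Gk_cont[OF tb]] in simp)
      qed
      finally show ?thesis .
    qed
    also have "\<dots> \<le> ennreal (5 / (2 * lam)) * (\<Sum>k\<in>fam0. ennreal (lam\<^sup>2))"
      using Gk_L2[OF t] lam2 by (intro mult_left_mono sum_mono) auto
    also have "\<dots> = ennreal (5 / (2 * lam) * (real (card fam0) * lam\<^sup>2))"
    proof -
      have "(\<Sum>k\<in>fam0. ennreal (lam\<^sup>2)) = ennreal (\<Sum>k\<in>fam0. lam\<^sup>2)"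
        by (rule sum_ennreal) simp
      also have "(\<Sum>k\<in>fam0. lam\<^sup>2) = real (card fam0) * lam\<^sup>2" by simp
      finally have e: "(\<Sum>k\<in>fam0. ennreal (lam\<^sup>2)) = ennreal (real (card fam0) * lam\<^sup>2)" .
      show ?thesis unfolding e by (rule ennreal_mult[symmetric]) (use lam in auto)
    qed
    also have "\<dots> \<le> ennreal (5 / (2 * lam) * (8 * lam\<^sup>2))"
      using lam card_fam0 by (intro ennreal_leI mult_left_mono mult_right_mono) auto
    also have "5 / (2 * lam) * (8 * lam\<^sup>2) = 20 * lam"
      using lam by (simp add: power2_eq_square field_simps)
    finally show ?thesis .
  qed
  also have "ennreal (20 * lam * pi ^ 3) + ennreal (20 * lam) = ennreal (lam * (20 * pi ^ 3 + 20))"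
    using lam by (simp add: ennreal_plus[symmetric] algebra_simps del: ennreal_plus)
  finally show ?thesis by (simp add: lam_def add_mono)
qed

end

lemma jb_nonneg[simp]: "0 \<le> jb z"
  using jb_pos[of z] by simp

lemma integrand_bound:
  fixes t K ab D :: real and v y :: "real^3"
  assumes ab: "(1 + t) * \<bar>ab\<bar> \<le> K * (jb v)\<^sup>2 * jb y" and t: "0 \<le> t"
  shows "\<bar>(1 + t) * jb v powr (2 * n - 1) * jb y powr (2 * m - 1) * ab * D\<^sup>2\<bar>
     \<le> K * (sqrt (jb v) * (jb v powr n * jb y powr m) * D)\<^sup>2"
proof -
  have jv: "0 < jb v" and jy: "0 < jb y" by (rule jb_pos)+
  have "\<bar>(1 + t) * jb v powr (2 * n - 1) * jb y powr (2 * m - 1) * ab * D\<^sup>2\<bar>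
      = (jb v powr (2 * n - 1) * jb y powr (2 * m - 1) * D\<^sup>2) * ((1 + t) * \<bar>ab\<bar>)"
    using t by (simp add: abs_mult mult_ac)
  also have "\<dots> \<le> (jb v powr (2 * n - 1) * jb y powr (2 * m - 1) * D\<^sup>2) * (K * (jb v)\<^sup>2 * jb y)"
    by (rule mult_left_mono[OF ab]) simp
  also have "\<dots> = K * (jb v powr (2 * n - 1) * (jb v)\<^sup>2) * (jb y powr (2 * m - 1) * jb y) * D\<^sup>2"
    by (simp add: mult_ac)
  also have "jb v powr (2 * n - 1) * (jb v)\<^sup>2 = jb v * (jb v powr n)\<^sup>2"
  proof -
    have "jb v powr (2 * n - 1) * (jb v)\<^sup>2 = jb v powr (2 * n - 1) * jb v powr 2"
      using jv by (simp add: powr_numeral)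
    also have "\<dots> = jb v powr ((2 * n - 1) + 2)" by (rule powr_add[symmetric])
    also have "\<dots> = jb v powr (1 + (n + n))" by (rule arg_cong[where f="\<lambda>e. jb v powr e"]) simp
    also have "\<dots> = jb v powr 1 * jb v powr (n + n)" by (rule powr_add)
    also have "\<dots> = jb v * (jb v powr n)\<^sup>2" using jv powr_add[of "jb v" n n] by (simp add: power2_eq_square)
    finally show ?thesis .
  qed
  also have "jb y powr (2 * m - 1) * jb y = (jb y powr m)\<^sup>2"
  proof -
    have "jb y powr (2 * m - 1) * jb y = jb y powr (2 * m - 1) * jb y powr 1" using jy by simp
    also have "\<dots> = jb y powr ((2 * m - 1) + 1)" by (rule powr_add[symmetric])
    also have "\<dots> = jb y powr (m + m)" by (rule arg_cong[where f="\<lambda>e. jb y powr e"]) simp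
    also have "\<dots> = (jb y powr m)\<^sup>2" using powr_add[of "jb y" m m] by (simp add: power2_eq_square)
    finally show ?thesis .
  qed
  also have "K * (jb v * (jb v powr n)\<^sup>2) * (jb y powr m)\<^sup>2 * D\<^sup>2 = K * (sqrt (jb v) * (jb v powr n * jb y powr m) * D)\<^sup>2"
    using jv by (simp add: power_mult_distrib mult_ac)
  finally show ?thesis .
qed

lemma abs_lint_le: "ennreal \<bar>integral\<^sup>L M h\<bar> \<le> (\<integral>\<^sup>+w. ennreal \<bar>h w\<bar> \<partial>M)" for h :: "'a \<Rightarrow> real"
proof (cases "integrable M h")
  case True
  then show ?thesis using integral_norm_bound_ennreal[OF True] by simp
next
  case False
  then show ?thesis by (simp add: not_integrable_integral_eq)
qed

context bctx begin

definition K0 :: real where "K0 = 16 * (20 * pi ^ 3 + 20)"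

lemma abar_bound:
  assumes g: "0 \<le> \<gamma>" "\<gamma> < 1" and t: "0 \<le> t" "t < T" "T < Tb"
  shows "(1 + t) * \<bar>abar \<gamma> f i j t x v\<bar> \<le> (K0 * \<epsilon> powr (3/4)) * (jb v)\<^sup>2 * jb (x - (t + 1) *\<^sub>R v)"
proof -
  define K where "K = \<epsilon> powr (3/4) * (20 * pi ^ 3 + 20)"
  define c1 where "c1 = 16 * (jb v)\<^sup>2 * jb (x - (t + 1) *\<^sub>R v)"
  have K: "0 \<le> K" unfolding K_def using eps by (intro mult_nonneg_nonneg) auto
  have c1: "0 \<le> c1" unfolding c1_def using jb_pos by (intro mult_nonneg_nonneg) (auto intro: less_imp_le)
  have "ennreal ((1 + t) * \<bar>abar \<gamma> f i j t x v\<bar>) = ennreal (1 + t) * ennreal \<bar>abar \<gamma> f i j t x v\<bar>"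
    using t by (simp add: ennreal_mult)
  also have "\<dots> \<le> ennreal (1 + t) * (\<integral>\<^sup>+w. ennreal \<bar>acoef \<gamma> i j (v - w) * f t x w\<bar> \<partial>lborel)"
    unfolding abar_def by (intro mult_left_mono abs_lint_le) simp
  also have "\<dots> = (\<integral>\<^sup>+w. ennreal (1 + t) * ennreal \<bar>acoef \<gamma> i j (v - w) * f t x w\<bar> \<partial>lborel)"
    by (rule nn_integral_cmult_gen[symmetric]) simp
  also have "\<dots> \<le> (\<integral>\<^sup>+w. ennreal c1 * ennreal ((jb w)\<^sup>2 * jb (x - (t + 1) *\<^sub>R w) * f t x w) \<partial>lborel)"
  proof (rule nn_integral_mono)
    fix w
    have fw: "0 \<le> f t x w" using fpos t by auto
    have "(1 + t) * \<bar>acoef \<gamma> i j (v - w) * f t x w\<bar> = ((1 + t) * \<bar>acoef \<gamma> i j (v - w)\<bar>) * f t x w"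
      using fw by (simp add: abs_mult)
    also have "\<dots> \<le> ((1 + t) * (2 * norm (v - w) powr (\<gamma> + 2))) * f t x w"
      using t fw acoef_bound[of \<gamma> i j "v - w"] by (intro mult_right_mono mult_left_mono) auto
    also have "\<dots> = 2 * ((1 + t) * norm (v - w) powr (\<gamma> + 2)) * f t x w" by (simp add: mult_ac)
    also have "\<dots> \<le> 2 * (8 * (jb v)\<^sup>2 * (jb w)\<^sup>2 * jb (x - (t + 1) *\<^sub>R v) * jb (x - (t + 1) *\<^sub>R w)) * f t x w"
      using key_geom[OF t(1) g, of v w x] fw by (intro mult_right_mono mult_left_mono) auto
    also have "\<dots> = c1 * ((jb w)\<^sup>2 * jb (x - (t + 1) *\<^sub>R w) * f t x w)"
      by (simp add: c1_def mult_ac)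
    finally have r: "(1 + t) * \<bar>acoef \<gamma> i j (v - w) * f t x w\<bar> \<le> c1 * ((jb w)\<^sup>2 * jb (x - (t + 1) *\<^sub>R w) * f t x w)" .
    have "ennreal (1 + t) * ennreal \<bar>acoef \<gamma> i j (v - w) * f t x w\<bar> = ennreal ((1 + t) * \<bar>acoef \<gamma> i j (v - w) * f t x w\<bar>)"
      using t by (simp add: ennreal_mult)
    also have "\<dots> \<le> ennreal (c1 * ((jb w)\<^sup>2 * jb (x - (t + 1) *\<^sub>R w) * f t x w))"
      by (rule ennreal_leI[OF r])
    also have "\<dots> = ennreal c1 * ennreal ((jb w)\<^sup>2 * jb (x - (t + 1) *\<^sub>R w) * f t x w)"
      by (rule ennreal_mult) (use c1 fw in \<open>auto intro!: mult_nonneg_nonneg\<close>)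
    finally show "ennreal (1 + t) * ennreal \<bar>acoef \<gamma> i j (v - w) * f t x w\<bar> \<le> ennreal c1 * ennreal ((jb w)\<^sup>2 * jb (x - (t + 1) *\<^sub>R w) * f t x w)" .
  qed
  also have "\<dots> = ennreal c1 * (\<integral>\<^sup>+w. ennreal ((jb w)\<^sup>2 * jb (x - (t + 1) *\<^sub>R w) * f t x w) \<partial>lborel)"
    by (rule nn_integral_cmult_gen) simp
  also have "\<dots> \<le> ennreal c1 * ennreal K"
    unfolding K_def by (intro mult_left_mono Sbound[OF t]) simp
  also have "\<dots> = ennreal (c1 * K)" using c1 K by (simp add: ennreal_mult)
  finally have le: "(1 + t) * \<bar>abar \<gamma> f i j t x v\<bar> \<le> c1 * K"
    using c1 K by (simp add: ennreal_le_iff)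
  have eq: "c1 * K = (K0 * \<epsilon> powr (3/4)) * (jb v)\<^sup>2 * jb (x - (t + 1) *\<^sub>R v)"
    unfolding c1_def K_def K0_def by (simp add: algebra_simps)
  show ?thesis using le eq by simp
qed

end

lemma main_bound:
  fixes \<gamma> d0 \<delta> \<epsilon> Tb T :: real and f :: phase_fun
  assumes g: "0 \<le> \<gamma>" "\<gamma> < 1" and d0: "0 < d0"
    and dl: "0 < \<delta>" and e0: "0 \<le> \<epsilon>" and e1: "\<epsilon> \<le> 1" and Tb: "0 < Tb"
    and sm: "smooth_on ({..<Tb} \<times> UNIV) (\<lambda>(t, x, v). f t x v)"
    and fpos: "\<forall>t x v. 0 \<le> t \<longrightarrow> t < Tb \<longrightarrow> 0 \<le> f t x v"
    and ini: "init_small d0 \<epsilon> f"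
    and en: "\<forall>T. 0 \<le> T \<longrightarrow> T < Tb \<longrightarrow> energy_sq \<delta> T (gfun d0 \<delta> f) \<le> ennreal ((\<epsilon> powr (3/4))\<^sup>2)"
    and m: "mlen a + mlen b + mlen s \<le> 10" and T: "0 \<le> T" "T < Tb"
  shows "A5 \<gamma> d0 \<delta> f a b s i j T
         \<le> ennreal (16 * (20 * pi ^ 3 + 20) * \<epsilon>\<^sup>2 * (1 + T) powr (2 * real (mlen b) * (1 + \<delta>)))"
proof -
  have eps: "0 < \<epsilon>"
  proof (rule ccontr)
    assume "\<not> 0 < \<epsilon>"
    then have "\<epsilon> = 0" using e0 by simp
    then show False using ini by (simp add: init_small_def)
  qed
  interpret bctx \<gamma> d0 \<delta> \<epsilon> Tb f
    by unfold_locales (use d0 dl eps Tb sm fpos en in auto)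
  define c where "c = K0 * \<epsilon> powr (3/4)"
  define p where "p = real (mlen b) * (1 + \<delta>)"
  have c: "0 \<le> c" using eps by (simp add: c_def K0_def)
  have p: "0 \<le> p" using dl by (simp add: p_def)
  define II where "II t = (\<integral>\<^sup>+x. \<integral>\<^sup>+v. ennreal \<bar>
      (1 + t) * jb v powr (2 * nu a b s - 1) * jb (x - (t + 1) *\<^sub>R v) powr (2 * omega a b s - 1)
      * abar \<gamma> f i j t x v * (Dop a b s (gfun d0 \<delta> f) t x v)\<^sup>2\<bar> \<partial>lborel \<partial>lborel)" for t
  define L where "L t = L2xv_sq (\<lambda>t x v. sqrt (jb v) * Wt a b s t x v * Dop a b s (gfun d0 \<delta> f) t x v) t" for t
  have "A5 \<gamma> d0 \<delta> f a b s i j T = (\<integral>\<^sup>+t. II t * indicator {0..T} t \<partial>lborel)"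
    by (simp add: A5_def II_def)
  also have "\<dots> = (\<integral>\<^sup>+t. II t * indicator {0..<T} t \<partial>lborel)"
    by (rule nn_integral_cong_AE) (use AE_lborel_singleton[of T] in \<open>auto simp: indicator_def\<close>)
  also have "\<dots> \<le> (\<integral>\<^sup>+t. ennreal c * (L t * indicator {0..<T} t) \<partial>lborel)"
  proof (rule nn_integral_mono)
    fix t :: real
    show "II t * indicator {0..<T} t \<le> ennreal c * (L t * indicator {0..<T} t)"
    proof (cases "t \<in> {0..<T}")
      case False then show ?thesis by simp
    next
      case True
      then have t: "0 \<le> t" "t < T" by auto
      have "II t \<le> (\<integral>\<^sup>+x. \<integral>\<^sup>+v. ennreal c * ennreal ((sqrt (jb v) * Wt a b s t x v * Dop a b s (gfun d0 \<delta> f) t x v)\<^sup>2) \<partial>lborel \<partial>lborel)"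
        unfolding II_def
      proof (intro nn_integral_mono)
        fix x v
        have ab: "(1 + t) * \<bar>abar \<gamma> f i j t x v\<bar> \<le> c * (jb v)\<^sup>2 * jb (x - (t + 1) *\<^sub>R v)"
          unfolding c_def by (rule abar_bound[OF g t T(2)])
        have "\<bar>(1 + t) * jb v powr (2 * nu a b s - 1) * jb (x - (t + 1) *\<^sub>R v) powr (2 * omega a b s - 1)
            * abar \<gamma> f i j t x v * (Dop a b s (gfun d0 \<delta> f) t x v)\<^sup>2\<bar>
          \<le> c * (sqrt (jb v) * Wt a b s t x v * Dop a b s (gfun d0 \<delta> f) t x v)\<^sup>2"
          using integrand_bound[OF ab t(1)] by (simp add: Wt_def mult.assoc)
        then show "ennreal \<bar>(1 + t) * jb v powr (2 * nu a b s - 1) * jb (x - (t + 1) *\<^sub>R v) powr (2 * omega a b s - 1)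
            * abar \<gamma> f i j t x v * (Dop a b s (gfun d0 \<delta> f) t x v)\<^sup>2\<bar>
          \<le> ennreal c * ennreal ((sqrt (jb v) * Wt a b s t x v * Dop a b s (gfun d0 \<delta> f) t x v)\<^sup>2)"
          using c by (simp add: ennreal_mult[symmetric] ennreal_leI)
      qed
      also have "\<dots> = ennreal c * L t"
        unfolding L_def L2xv_sq_def by (simp add: nn_integral_cmult_gen)
      finally show ?thesis using True by simp
    qed
  qed
  also have "\<dots> = ennreal c * (\<integral>\<^sup>+t. L t * indicator {0..<T} t \<partial>lborel)"
    by (rule nn_integral_cmult_gen) simp
  also have "(\<integral>\<^sup>+t. L t * indicator {0..<T} t \<partial>lborel) \<le> ennreal ((1 + T) powr p) * ennreal (\<epsilon> powr (3/2))"
  proof -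
    let ?S = "SUP t\<in>{0..<T}. L2xv_sq (\<lambda>t x v. Wt a b s t x v * Dop a b s (gfun d0 \<delta> f) t x v) t"
    let ?I = "\<integral>\<^sup>+t. L t * indicator {0..<T} t \<partial>lborel"
    have et: "ennreal ((1 + T) powr (- p)) * (?S + ?I) \<le> ennreal (\<epsilon> powr (3/2))"
      using en_term[OF T m] by (simp add: p_def L_def)
    have "?I = ennreal ((1 + T) powr p) * (ennreal ((1 + T) powr (- p)) * ?I)"
    proof -
      have "(1 + T) powr p * (1 + T) powr (- p) = 1"
        using T by (simp add: powr_add[symmetric])
      then have "ennreal ((1 + T) powr p) * ennreal ((1 + T) powr (- p)) = 1"
        by (simp add: ennreal_mult[symmetric])
      then show ?thesis by (simp add: mult.assoc[symmetric])
    qed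
    also have "\<dots> \<le> ennreal ((1 + T) powr p) * (ennreal ((1 + T) powr (- p)) * (?S + ?I))"
      by (intro mult_left_mono) auto
    also have "\<dots> \<le> ennreal ((1 + T) powr p) * ennreal (\<epsilon> powr (3/2))"
      by (intro mult_left_mono et) simp
    finally show ?thesis .
  qed
  then have "ennreal c * (\<integral>\<^sup>+t. L t * indicator {0..<T} t \<partial>lborel) \<le> ennreal c * (ennreal ((1 + T) powr p) * ennreal (\<epsilon> powr (3/2)))"
    by (rule mult_left_mono) simp
  also have "\<dots> = ennreal (c * ((1 + T) powr p * \<epsilon> powr (3/2)))"
    using c by (simp add: ennreal_mult)
  also have "\<dots> \<le> ennreal (16 * (20 * pi ^ 3 + 20) * \<epsilon>\<^sup>2 * (1 + T) powr (2 * real (mlen b) * (1 + \<delta>)))"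
  proof (rule ennreal_leI)
    have e1': "\<epsilon> powr (3/4) * \<epsilon> powr (3/2) \<le> \<epsilon>\<^sup>2"
    proof -
      have "\<epsilon> powr (3/4) * \<epsilon> powr (3/2) = \<epsilon> powr (9/4)" by (simp add: powr_add[symmetric])
      also have "\<dots> \<le> \<epsilon> powr 2" using eps e1 by (intro powr_mono') auto
      also have "\<dots> = \<epsilon>\<^sup>2" using eps by (simp add: powr_numeral)
      finally show ?thesis .
    qed
    have pp: "p \<le> 2 * real (mlen b) * (1 + \<delta>)"
    proof -
      have "2 * real (mlen b) * (1 + \<delta>) = 2 * p" by (simp add: p_def)
      then show ?thesis using p by linarith
    qed
    have T1: "(1 + T) powr p \<le> (1 + T) powr (2 * real (mlen b) * (1 + \<delta>))"
      using T by (intro powr_mono[OF pp]) auto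
    have K0: "0 \<le> K0" by (simp add: K0_def)
    have "c * ((1 + T) powr p * \<epsilon> powr (3/2)) = K0 * (\<epsilon> powr (3/4) * \<epsilon> powr (3/2)) * (1 + T) powr p"
      by (simp add: c_def mult_ac)
    also have "\<dots> \<le> K0 * \<epsilon>\<^sup>2 * (1 + T) powr (2 * real (mlen b) * (1 + \<delta>))"
      using e1' T1 K0 by (intro mult_mono mult_left_mono) auto
    finally show "c * ((1 + T) powr p * \<epsilon> powr (3/2)) \<le> 16 * (20 * pi ^ 3 + 20) * \<epsilon>\<^sup>2 * (1 + T) powr (2 * real (mlen b) * (1 + \<delta>))"
      by (simp add: K0_def)
  qed
  finally show ?thesis .
qed

theorem proposition7p15:
  fixes \<gamma> d0 :: real
  assumes "0 \<le> \<gamma>" "\<gamma> < 1" "0 < d0"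
  shows "\<exists>\<epsilon>0 > 0. \<exists>C. \<forall>\<delta> \<epsilon> Tb (f :: phase_fun).
    0 < \<delta> \<longrightarrow> \<delta> < 1/8 \<longrightarrow> 0 \<le> \<epsilon> \<longrightarrow> \<epsilon> \<le> \<epsilon>0 \<longrightarrow> 0 < Tb \<longrightarrow>
    smooth_on ({..<Tb} \<times> UNIV) (\<lambda>(t, x, v). f t x v) \<longrightarrow>
    landau_sol \<gamma> Tb f \<longrightarrow>
    (\<forall>t x v. 0 \<le> t \<longrightarrow> t < Tb \<longrightarrow> 0 \<le> f t x v) \<longrightarrow>
    init_small d0 \<epsilon> f \<longrightarrow>
    (\<forall>T. 0 \<le> T \<longrightarrow> T < Tb \<longrightarrow> energy_sq \<delta> T (gfun d0 \<delta> f) \<le> ennreal ((\<epsilon> powr (3/4))\<^sup>2)) \<longrightarrow>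
    (\<forall>a b s i j T. mlen a + mlen b + mlen s \<le> 10 \<longrightarrow> 0 \<le> T \<longrightarrow> T < Tb \<longrightarrow>
       A5 \<gamma> d0 \<delta> f a b s i j T
         \<le> ennreal (C * \<epsilon>\<^sup>2 * (1 + T) powr (2 * real (mlen b) * (1 + \<delta>))))"
  apply (rule exI[of _ "1::real"])
  apply (rule conjI)
   apply simp
  apply (rule exI[of _ "16 * (20 * pi ^ 3 + 20)"])
  apply (intro allI impI)
  subgoal for \<delta> \<epsilon> Tb f a b s i j T
    by (rule main_bound[OF assms, where Tb=Tb and \<delta>=\<delta> and \<epsilon>=\<epsilon> and f=f and T=T]) assumption+
  done

end
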